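(* Every concatenation-closed pseudovariety of semigroupoids is equidivisible.
   Context: Semigroupoids: graphs with associative partial multiplication $st$ defined iff the source of $s$ equals the range of $t$. A pseudovariety of semigroupoids (class of finite semigroupoids closed under divisors, finite direct products and finite coproducts) $\mathsf V$ is concatenation-closed if for every finite graph $A$ the $\mathsf V$-recognizable languages $L\subseteq E(A^+)$ (those with $L=\varphi^{-1}\varphi(L)$ for a homomorphism $\varphi\colon A^+\to F\in\mathsf V$, where $A^+$ is the free semigroupoid of nonempty paths) are closed under concatenation. A semigroupoid $S$ is equidivisible if whenever $uv=xy$ there is $t\in E(S^I)$ ($S^I$: local identities adjoined) with ($ut=x$ and $v=ty$) or ($xt=u$ and $y=tv$); $\mathsf V$ is equidivisible if the free pro-$\mathsf V$ semigroupoid $\overline{\Omega}_A\mathsf V$ is equidivisible for every finite graph $A$. *)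

theory Defs
  imports Main
begin

text \<open>The function gmult is only
  meaningful on composable pairs.\<close>

record ('v, 'e) graph =
  verts :: "'v set"
  edges :: "'e set"
  src   :: "'e \<Rightarrow> 'v"
  rng   :: "'e \<Rightarrow> 'v"

record ('v, 'e) sgd = "('v, 'e) graph" +
  gmult :: "'e \<Rightarrow> 'e \<Rightarrow> 'e"

definition is_graph :: "('v, 'e, 'z) graph_scheme \<Rightarrow> bool" where
  "is_graph G \<longleftrightarrow> (\<forall>e\<in>edges G. src G e \<in> verts G \<and> rng G e \<in> verts G)"

definition finite_graph :: "('v, 'e, 'z) graph_scheme \<Rightarrow> bool" where
  "finite_graph G \<longleftrightarrow> is_graph G \<and> finite (verts G) \<and> finite (edges G)"

definition is_sgd :: "('v, 'e) sgd \<Rightarrow> bool" where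
  "is_sgd S \<longleftrightarrow> is_graph S \<and>
     (\<forall>s\<in>edges S. \<forall>t\<in>edges S. src S s = rng S t \<longrightarrow>
        gmult S s t \<in> edges S \<and> src S (gmult S s t) = src S t \<and> rng S (gmult S s t) = rng S s) \<and>
     (\<forall>s\<in>edges S. \<forall>t\<in>edges S. \<forall>u\<in>edges S. src S s = rng S t \<and> src S t = rng S u \<longrightarrow>
        gmult S (gmult S s t) u = gmult S s (gmult S t u))"

definition finite_sgd :: "('v, 'e) sgd \<Rightarrow> bool" where
  "finite_sgd S \<longleftrightarrow> is_sgd S \<and> finite (verts S) \<and> finite (edges S)"

definition is_hom :: "('a, 'b) sgd \<Rightarrow> ('c, 'd) sgd \<Rightarrow> ('a \<Rightarrow> 'c) \<Rightarrow> ('b \<Rightarrow> 'd) \<Rightarrow> bool" where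
  "is_hom S T fv fe \<longleftrightarrow>
     (\<forall>v\<in>verts S. fv v \<in> verts T) \<and>
     (\<forall>e\<in>edges S. fe e \<in> edges T \<and> src T (fe e) = fv (src S e) \<and> rng T (fe e) = fv (rng S e)) \<and>
     (\<forall>s\<in>edges S. \<forall>t\<in>edges S. src S s = rng S t \<longrightarrow> fe (gmult S s t) = gmult T (fe s) (fe t))"

text \<open>Division (Tilson): S divides T iff there is a relational morphism
  (a vertex function and an edge relation with nonempty coterminal images,
  compatible with multiplication) which is injective, i.e. distinct coterminal
  edges have disjoint images.\<close>

definition divides :: "('a, 'b) sgd \<Rightarrow> ('c, 'd) sgd \<Rightarrow> bool" where
  "divides S T \<longleftrightarrow> (\<exists>(tv :: 'a \<Rightarrow> 'c) (te :: 'b \<Rightarrow> 'd set).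
     (\<forall>v\<in>verts S. tv v \<in> verts T) \<and>
     (\<forall>s\<in>edges S. te s \<noteq> {} \<and> te s \<subseteq> edges T \<and>
        (\<forall>t\<in>te s. src T t = tv (src S s) \<and> rng T t = tv (rng S s))) \<and>
     (\<forall>s\<in>edges S. \<forall>s'\<in>edges S. src S s = rng S s' \<longrightarrow>
        (\<forall>t\<in>te s. \<forall>t'\<in>te s'. gmult T t t' \<in> te (gmult S s s'))) \<and>
     (\<forall>s\<in>edges S. \<forall>s'\<in>edges S. s \<noteq> s' \<and> src S s = src S s' \<and> rng S s = rng S s' \<longrightarrow>
        te s \<inter> te s' = {}))"

definition sgd_prod :: "('a, 'b) sgd \<Rightarrow> ('c, 'd) sgd \<Rightarrow> ('a \<times> 'c, 'b \<times> 'd) sgd" where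
  "sgd_prod S T = \<lparr> verts = verts S \<times> verts T, edges = edges S \<times> edges T,
     src = (\<lambda>(s, t). (src S s, src T t)), rng = (\<lambda>(s, t). (rng S s, rng T t)),
     gmult = (\<lambda>(s, t) (s', t'). (gmult S s s', gmult T t t')) \<rparr>"

definition sgd_coprod :: "('a, 'b) sgd \<Rightarrow> ('c, 'd) sgd \<Rightarrow> ('a + 'c, 'b + 'd) sgd" where
  "sgd_coprod S T = \<lparr> verts = Inl ` verts S \<union> Inr ` verts T, edges = Inl ` edges S \<union> Inr ` edges T,
     src = case_sum (\<lambda>s. Inl (src S s)) (\<lambda>t. Inr (src T t)),
     rng = case_sum (\<lambda>s. Inl (rng S s)) (\<lambda>t. Inr (rng T t)),
     gmult = (\<lambda>x y. case (x, y) of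
                 (Inl s, Inl s') \<Rightarrow> Inl (gmult S s s')
               | (Inr t, Inr t') \<Rightarrow> Inr (gmult T t t')
               | _ \<Rightarrow> undefined) \<rparr>"

text \<open>The trivial semigroupoid (empty direct product): one vertex, one loop.\<close>

definition sgd_trivial :: "(unit, unit) sgd" where
  "sgd_trivial = \<lparr> verts = {()}, edges = {()}, src = (\<lambda>_. ()), rng = (\<lambda>_. ()),
     gmult = (\<lambda>_ _. ()) \<rparr>"

text \<open>A pseudovariety is a class of finite semigroupoids; every finite
  semigroupoid is isomorphic to one whose vertices and edges are natural
  numbers, so we represent the class by its members carried by nat.\<close>

definition pseudovariety :: "(nat, nat) sgd set \<Rightarrow> bool" where
  "pseudovariety V \<longleftrightarrow>
     (\<forall>S\<in>V. finite_sgd S) \<and>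
     (\<forall>S T. finite_sgd S \<and> T \<in> V \<and> divides S T \<longrightarrow> S \<in> V) \<and>
     (\<forall>R. finite_sgd R \<and> divides R sgd_trivial \<longrightarrow> R \<in> V) \<and>
     (\<forall>R S T. finite_sgd R \<and> S \<in> V \<and> T \<in> V \<and> divides R (sgd_prod S T) \<longrightarrow> R \<in> V) \<and>
     (\<forall>R S T. finite_sgd R \<and> S \<in> V \<and> T \<in> V \<and> divides R (sgd_coprod S T) \<longrightarrow> R \<in> V)"

text \<open>A^+: vertices of A, edges = nonempty paths, written as lists
  [a1,...,an] with src a_i = rng a_(i+1); the product is concatenation.\<close>

definition free_sgd :: "('v, 'e, 'z) graph_scheme \<Rightarrow> ('v, 'e list) sgd" where
  "free_sgd A = \<lparr> verts = verts A,
     edges = {w. w \<noteq> [] \<and> set w \<subseteq> edges A \<and>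
                 (\<forall>i. Suc i < length w \<longrightarrow> src A (w ! i) = rng A (w ! Suc i))},
     src = (\<lambda>w. src A (last w)), rng = (\<lambda>w. rng A (hd w)),
     gmult = (\<lambda>u v. u @ v) \<rparr>"

definition recognizable ::
  "(nat, nat) sgd set \<Rightarrow> ('v, 'e, 'z) graph_scheme \<Rightarrow> 'e list set \<Rightarrow> bool" where
  "recognizable V A L \<longleftrightarrow> L \<subseteq> edges (free_sgd A) \<and>
     (\<exists>F fv fe. F \<in> V \<and> is_hom (free_sgd A) F fv fe \<and>
        L = {w \<in> edges (free_sgd A). fe w \<in> fe ` L})"

definition concat :: "('v, 'e, 'z) graph_scheme \<Rightarrow> 'e list set \<Rightarrow> 'e list set \<Rightarrow> 'e list set" where
  "concat A L K = {gmult (free_sgd A) u v | u v. u \<in> L \<and> v \<in> K \<and>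
                     src (free_sgd A) u = rng (free_sgd A) v}"

text \<open>Concatenation-closed; finite graphs are taken up to isomorphism, i.e.
  carried by nat.\<close>

definition concat_closed :: "(nat, nat) sgd set \<Rightarrow> bool" where
  "concat_closed V \<longleftrightarrow> (\<forall>A :: (nat, nat) graph. finite_graph A \<longrightarrow>
     (\<forall>L K. recognizable V A L \<and> recognizable V A K \<longrightarrow> recognizable V A (concat A L K)))"

text \<open>Constructed as the projective limit of all homomorphisms from A^+ into
  members of V.  An edge is a triple (s, r, x): source vertex s, range vertex r
  of A, and a compatible family x assigning to each homomorphism
  phi : A^+ \<rightarrow> S (S in V) an edge of S (normalised to undefined on invalid
  indices).\<close>

type_synonym ('v, 'e) proidx = "(nat, nat) sgd \<times> ('v \<Rightarrow> nat) \<times> ('e list \<Rightarrow> nat)"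

definition valid_idx :: "(nat, nat) sgd set \<Rightarrow> ('v, 'e, 'z) graph_scheme \<Rightarrow> ('v, 'e) proidx \<Rightarrow> bool" where
  "valid_idx V A i \<longleftrightarrow> (case i of (S, fv, fe) \<Rightarrow> S \<in> V \<and> is_hom (free_sgd A) S fv fe)"

definition pro_elem ::
  "(nat, nat) sgd set \<Rightarrow> ('v, 'e, 'z) graph_scheme \<Rightarrow> 'v \<times> 'v \<times> (('v, 'e) proidx \<Rightarrow> nat) \<Rightarrow> bool" where
  "pro_elem V A p \<longleftrightarrow> (case p of (s, r, x) \<Rightarrow>
     s \<in> verts A \<and> r \<in> verts A \<and>
     (\<forall>i. \<not> valid_idx V A i \<longrightarrow> x i = undefined) \<and>
     (\<forall>S fv fe. valid_idx V A (S, fv, fe) \<longrightarrow>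
        x (S, fv, fe) \<in> edges S \<and> src S (x (S, fv, fe)) = fv s \<and> rng S (x (S, fv, fe)) = fv r) \<and>
     (\<forall>S fv fe T gv ge hv he. valid_idx V A (S, fv, fe) \<and> valid_idx V A (T, gv, ge) \<and>
        is_hom S T hv he \<and> (\<forall>v\<in>verts A. gv v = hv (fv v)) \<and>
        (\<forall>w\<in>edges (free_sgd A). ge w = he (fe w)) \<longrightarrow>
        x (T, gv, ge) = he (x (S, fv, fe))))"

definition free_pro ::
  "(nat, nat) sgd set \<Rightarrow> ('v, 'e, 'z) graph_scheme \<Rightarrow> ('v, 'v \<times> 'v \<times> (('v, 'e) proidx \<Rightarrow> nat)) sgd" where
  "free_pro V A = \<lparr> verts = verts A, edges = {p. pro_elem V A p},
     src = (\<lambda>(s, r, x). s), rng = (\<lambda>(s, r, x). r),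
     gmult = (\<lambda>(s, r, x) (s', r', y).
        (s', r, (\<lambda>i. if valid_idx V A i then gmult (fst i) (x i) (y i) else undefined))) \<rparr>"

text \<open>S^I: S with a local identity adjoined at each vertex (Inr v is the
  identity at v).\<close>

definition sgd_I :: "('v, 'e) sgd \<Rightarrow> ('v, 'e + 'v) sgd" where
  "sgd_I S = \<lparr> verts = verts S, edges = Inl ` edges S \<union> Inr ` verts S,
     src = case_sum (src S) (\<lambda>v. v), rng = case_sum (rng S) (\<lambda>v. v),
     gmult = (\<lambda>x y. case (x, y) of
                 (Inl s, Inl t) \<Rightarrow> Inl (gmult S s t)
               | (Inr _, _) \<Rightarrow> y
               | (Inl _, Inr _) \<Rightarrow> x) \<rparr>"

definition equidivisible :: "('v, 'e) sgd \<Rightarrow> bool" where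
  "equidivisible S \<longleftrightarrow>
     (\<forall>u\<in>edges S. \<forall>v\<in>edges S. \<forall>x\<in>edges S. \<forall>y\<in>edges S.
        src S u = rng S v \<and> src S x = rng S y \<and> gmult S u v = gmult S x y \<longrightarrow>
        (\<exists>t\<in>edges (sgd_I S).
           (src (sgd_I S) (Inl u) = rng (sgd_I S) t \<and> gmult (sgd_I S) (Inl u) t = Inl x \<and>
            src (sgd_I S) t = rng (sgd_I S) (Inl y) \<and> Inl v = gmult (sgd_I S) t (Inl y)) \<or>
           (src (sgd_I S) (Inl x) = rng (sgd_I S) t \<and> gmult (sgd_I S) (Inl x) t = Inl u \<and>
            src (sgd_I S) t = rng (sgd_I S) (Inl v) \<and> Inl y = gmult (sgd_I S) t (Inl v))))"

end

theory Submission
  imports Defs "HOL-Analysis.Function_Topology" "HOL-Library.Nat_Bijection"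
begin

lemma free_sgd_simps [simp]:
  "verts (free_sgd A) = verts A"
  "src (free_sgd A) w = src A (last w)"
  "rng (free_sgd A) w = rng A (hd w)"
  "gmult (free_sgd A) u v = u @ v"
  by (simp_all add: free_sgd_def)

lemma free_edges:
  "w \<in> edges (free_sgd A) \<longleftrightarrow> w \<noteq> [] \<and> set w \<subseteq> edges A \<and> successively (\<lambda>a b. src A a = rng A b) w"
  by (simp add: free_sgd_def successively_conv_nth)

lemma path_append:
  assumes "a \<in> edges (free_sgd A)" "b \<in> edges (free_sgd A)" "src A (last a) = rng A (hd b)"
  shows "a @ b \<in> edges (free_sgd A)"
  using assms by (auto simp: free_edges successively_append_iff)

lemma path_appendD:
  assumes "a @ b \<in> edges (free_sgd A)" "a \<noteq> []" "b \<noteq> []"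
  shows "a \<in> edges (free_sgd A)" "b \<in> edges (free_sgd A)" "src A (last a) = rng A (hd b)"
  using assms by (auto simp: free_edges successively_append_iff)

lemma hom_append:
  assumes "is_hom (free_sgd A) S fv fe" "a \<in> edges (free_sgd A)" "b \<in> edges (free_sgd A)"
    "src A (last a) = rng A (hd b)"
  shows "fe (a @ b) = gmult S (fe a) (fe b)"
  using assms unfolding is_hom_def by (metis free_sgd_simps)

lemma hom_edge:
  assumes "is_hom (free_sgd A) S fv fe" "w \<in> edges (free_sgd A)"
  shows "fe w \<in> edges S" "src S (fe w) = fv (src A (last w))" "rng S (fe w) = fv (rng A (hd w))"
  using assms unfolding is_hom_def by auto

lemma is_hom_comp:
  assumes "is_hom S T fv fe" "is_hom T U gv ge"
  shows "is_hom S U (gv \<circ> fv) (ge \<circ> fe)"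
  using assms unfolding is_hom_def by auto

definition refines :: "(nat, nat) sgd set \<Rightarrow> ('v, 'e, 'z) graph_scheme \<Rightarrow> ('v, 'e) proidx \<Rightarrow> ('v, 'e) proidx \<Rightarrow> bool" where
  "refines V A k i \<longleftrightarrow> valid_idx V A k \<and> valid_idx V A i \<and>
    (\<exists>hv he. is_hom (fst k) (fst i) hv he \<and> (\<forall>v\<in>verts A. fst (snd i) v = hv (fst (snd k) v)) \<and>
        (\<forall>w\<in>edges (free_sgd A). snd (snd i) w = he (snd (snd k) w)))"

lemma refines_trans:
  assumes "refines V A k j" "refines V A j i" shows "refines V A k i"
proof -
  obtain S fv fe where k: "k = (S, fv, fe)" by (cases k) auto
  obtain T gv ge where j: "j = (T, gv, ge)" by (cases j) auto
  obtain U hv he where i: "i = (U, hv, he)" by (cases i) auto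
  from assms obtain av ae bv be where
    "is_hom S T av ae" "\<forall>v\<in>verts A. gv v = av (fv v)" "\<forall>w\<in>edges (free_sgd A). ge w = ae (fe w)"
    "is_hom T U bv be" "\<forall>v\<in>verts A. hv v = bv (gv v)" "\<forall>w\<in>edges (free_sgd A). he w = be (ge w)"
    unfolding refines_def k j i by auto
  moreover have "is_hom S U (bv \<circ> av) (be \<circ> ae)" using calculation by (auto intro: is_hom_comp)
  ultimately show ?thesis using assms unfolding refines_def k j i
    by (metis comp_apply fst_conv snd_conv)
qed

lemma pro_compat0:
  assumes "pro_elem V A (s, r, x)" "valid_idx V A (S, fv, fe)" "valid_idx V A (T, gv, ge)"
    "is_hom S T hv he" "\<forall>v\<in>verts A. gv v = hv (fv v)" "\<forall>w\<in>edges (free_sgd A). ge w = he (fe w)"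
  shows "x (T, gv, ge) = he (x (S, fv, fe))"
proof -
  have c: "\<forall>S fv fe T gv ge hv he. valid_idx V A (S, fv, fe) \<and> valid_idx V A (T, gv, ge) \<and>
        is_hom S T hv he \<and> (\<forall>v\<in>verts A. gv v = hv (fv v)) \<and>
        (\<forall>w\<in>edges (free_sgd A). ge w = he (fe w)) \<longrightarrow>
        x (T, gv, ge) = he (x (S, fv, fe))" using assms(1) unfolding pro_elem_def prod.case by (elim conjE) assumption
  show ?thesis
    using c[rule_format, of S fv fe T gv ge hv he] assms(2-) by blast
qed

lemma pv_finite: "pseudovariety V \<Longrightarrow> S \<in> V \<Longrightarrow> finite_sgd S"
  unfolding pseudovariety_def by blast

lemma pv_div: "pseudovariety V \<Longrightarrow> finite_sgd R \<Longrightarrow> T \<in> V \<Longrightarrow> divides R T \<Longrightarrow> R \<in> V"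
  unfolding pseudovariety_def by blast

lemma pv_triv: "pseudovariety V \<Longrightarrow> finite_sgd R \<Longrightarrow> divides R sgd_trivial \<Longrightarrow> R \<in> V"
  unfolding pseudovariety_def by blast

lemma pv_prod: "pseudovariety V \<Longrightarrow> finite_sgd R \<Longrightarrow> S \<in> V \<Longrightarrow> T \<in> V \<Longrightarrow> divides R (sgd_prod S T) \<Longrightarrow> R \<in> V"
  unfolding pseudovariety_def by blast

lemma pro_compat:
  assumes "pro_elem V A (s, r, x)" "refines V A k i"
  shows "\<exists>he hv. is_hom (fst k) (fst i) hv he \<and> x i = he (x k) \<and>
     (\<forall>w\<in>edges (free_sgd A). snd (snd i) w = he (snd (snd k) w))"
proof -
  obtain S fv fe where k: "k = (S, fv, fe)" by (cases k) auto
  obtain U hv he where i: "i = (U, hv, he)" by (cases i) auto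
  from assms(2) obtain av ae where h:
    "is_hom S U av ae" "\<forall>v\<in>verts A. hv v = av (fv v)" "\<forall>w\<in>edges (free_sgd A). he w = ae (fe w)"
    "valid_idx V A (S, fv, fe)" "valid_idx V A (U, hv, he)"
    unfolding refines_def k i by auto
  have c: "\<forall>S fv fe T gv ge hv he. valid_idx V A (S, fv, fe) \<and> valid_idx V A (T, gv, ge) \<and>
        is_hom S T hv he \<and> (\<forall>v\<in>verts A. gv v = hv (fv v)) \<and>
        (\<forall>w\<in>edges (free_sgd A). ge w = he (fe w)) \<longrightarrow>
        x (T, gv, ge) = he (x (S, fv, fe))" using assms(1) unfolding pro_elem_def prod.case by (elim conjE) assumption
  have "x (U, hv, he) = ae (x (S, fv, fe))"
    using c[rule_format, of S fv fe U hv he av ae] h by blast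
  with h show ?thesis unfolding k i by auto
qed

lemma pro_elemD:
  assumes "pro_elem V A (s, r, x)" "valid_idx V A (S, fv, fe)"
  shows "x (S, fv, fe) \<in> edges S" "src S (x (S, fv, fe)) = fv s" "rng S (x (S, fv, fe)) = fv r"
  using assms unfolding pro_elem_def by auto

lemma pro_elem_verts:
  assumes "pro_elem V A (s, r, x)" shows "s \<in> verts A" "r \<in> verts A"
    "\<And>i. \<not> valid_idx V A i \<Longrightarrow> x i = undefined"
  using assms unfolding pro_elem_def by auto


lemma path_ends:
  assumes "is_graph A" "w \<in> edges (free_sgd A)"
  shows "src A (last w) \<in> verts A" "rng A (hd w) \<in> verts A" "hd w \<in> edges A" "last w \<in> edges A"
proof -
  have "hd w \<in> edges A" "last w \<in> edges A"
    using assms(2) last_in_set[of w] hd_in_set[of w] unfolding free_edges by auto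
  then show "src A (last w) \<in> verts A" "rng A (hd w) \<in> verts A" "hd w \<in> edges A" "last w \<in> edges A"
    using assms(1) unfolding is_graph_def by auto
qed

definition prodS :: "(nat, nat) sgd \<Rightarrow> (nat, nat) sgd \<Rightarrow> (nat, nat) sgd" where
  "prodS S T = \<lparr> verts = prod_encode ` (verts S \<times> verts T), edges = prod_encode ` (edges S \<times> edges T),
     src = (\<lambda>e. prod_encode (src S (fst (prod_decode e)), src T (snd (prod_decode e)))),
     rng = (\<lambda>e. prod_encode (rng S (fst (prod_decode e)), rng T (snd (prod_decode e)))),
     gmult = (\<lambda>e e'. prod_encode (gmult S (fst (prod_decode e)) (fst (prod_decode e')),
                                 gmult T (snd (prod_decode e)) (snd (prod_decode e')))) \<rparr>"

lemma prodS_simps [simp]: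
  "verts (prodS S T) = prod_encode ` (verts S \<times> verts T)"
  "edges (prodS S T) = prod_encode ` (edges S \<times> edges T)"
  "src (prodS S T) e = prod_encode (src S (fst (prod_decode e)), src T (snd (prod_decode e)))"
  "rng (prodS S T) e = prod_encode (rng S (fst (prod_decode e)), rng T (snd (prod_decode e)))"
  "gmult (prodS S T) e e' = prod_encode (gmult S (fst (prod_decode e)) (fst (prod_decode e')),
                                 gmult T (snd (prod_decode e)) (snd (prod_decode e')))"
  by (simp_all add: prodS_def)

lemma finite_prodS:
  assumes "finite_sgd S" "finite_sgd T" shows "finite_sgd (prodS S T)"
proof -
  have gS: "is_graph S" "is_graph T" and fin: "finite (verts S)" "finite (verts T)" "finite (edges S)" "finite (edges T)"
    using assms unfolding finite_sgd_def is_sgd_def by auto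
  have mS: "\<And>s t. s \<in> edges S \<Longrightarrow> t \<in> edges S \<Longrightarrow> src S s = rng S t \<Longrightarrow>
      gmult S s t \<in> edges S \<and> src S (gmult S s t) = src S t \<and> rng S (gmult S s t) = rng S s"
    using assms(1) unfolding finite_sgd_def is_sgd_def by blast
  have mT: "\<And>s t. s \<in> edges T \<Longrightarrow> t \<in> edges T \<Longrightarrow> src T s = rng T t \<Longrightarrow>
      gmult T s t \<in> edges T \<and> src T (gmult T s t) = src T t \<and> rng T (gmult T s t) = rng T s"
    using assms(2) unfolding finite_sgd_def is_sgd_def by blast
  have aS: "\<And>s t u. s \<in> edges S \<Longrightarrow> t \<in> edges S \<Longrightarrow> u \<in> edges S \<Longrightarrow> src S s = rng S t \<Longrightarrow> src S t = rng S u \<Longrightarrow>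
        gmult S (gmult S s t) u = gmult S s (gmult S t u)"
    using assms(1) unfolding finite_sgd_def is_sgd_def by blast
  have aT: "\<And>s t u. s \<in> edges T \<Longrightarrow> t \<in> edges T \<Longrightarrow> u \<in> edges T \<Longrightarrow> src T s = rng T t \<Longrightarrow> src T t = rng T u \<Longrightarrow>
        gmult T (gmult T s t) u = gmult T s (gmult T t u)"
    using assms(2) unfolding finite_sgd_def is_sgd_def by blast
  have g: "is_graph (prodS S T)" using gS unfolding is_graph_def by auto
  have m: "\<forall>s\<in>edges (prodS S T). \<forall>t\<in>edges (prodS S T). src (prodS S T) s = rng (prodS S T) t \<longrightarrow>
        gmult (prodS S T) s t \<in> edges (prodS S T) \<and> src (prodS S T) (gmult (prodS S T) s t) = src (prodS S T) t \<and>
        rng (prodS S T) (gmult (prodS S T) s t) = rng (prodS S T) s"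
  proof (intro ballI impI)
    fix s t assume st: "s \<in> edges (prodS S T)" "t \<in> edges (prodS S T)" "src (prodS S T) s = rng (prodS S T) t"
    then obtain a b c d where ab: "s = prod_encode (a, b)" "t = prod_encode (c, d)" "a \<in> edges S" "b \<in> edges T"
      "c \<in> edges S" "d \<in> edges T" by auto
    with st(3) have "src S a = rng S c" "src T b = rng T d" by auto
    then show "gmult (prodS S T) s t \<in> edges (prodS S T) \<and> src (prodS S T) (gmult (prodS S T) s t) = src (prodS S T) t \<and>
        rng (prodS S T) (gmult (prodS S T) s t) = rng (prodS S T) s"
      using mS[of a c] mT[of b d] ab by auto
  qed
  have a: "\<forall>s\<in>edges (prodS S T). \<forall>t\<in>edges (prodS S T). \<forall>u\<in>edges (prodS S T).
     src (prodS S T) s = rng (prodS S T) t \<and> src (prodS S T) t = rng (prodS S T) u \<longrightarrow>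
     gmult (prodS S T) (gmult (prodS S T) s t) u = gmult (prodS S T) s (gmult (prodS S T) t u)"
  proof (intro ballI impI)
    fix s t u assume st: "s \<in> edges (prodS S T)" "t \<in> edges (prodS S T)" "u \<in> edges (prodS S T)"
      "src (prodS S T) s = rng (prodS S T) t \<and> src (prodS S T) t = rng (prodS S T) u"
    then obtain a b c d e f where ab: "s = prod_encode (a, b)" "t = prod_encode (c, d)" "u = prod_encode (e, f)"
      "a \<in> edges S" "b \<in> edges T" "c \<in> edges S" "d \<in> edges T" "e \<in> edges S" "f \<in> edges T" by auto
    with st(4) have "src S a = rng S c" "src T b = rng T d" "src S c = rng S e" "src T d = rng T f" by auto
    then show "gmult (prodS S T) (gmult (prodS S T) s t) u = gmult (prodS S T) s (gmult (prodS S T) t u)"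
      using aS[of a c e] aT[of b d f] ab by auto
  qed
  show ?thesis unfolding finite_sgd_def is_sgd_def using g m a fin by auto
qed

lemma sgd_prod_simps [simp]:
  "verts (sgd_prod S T) = verts S \<times> verts T" "edges (sgd_prod S T) = edges S \<times> edges T"
  "src (sgd_prod S T) (a, b) = (src S a, src T b)" "rng (sgd_prod S T) (a, b) = (rng S a, rng T b)"
  "gmult (sgd_prod S T) (a, b) (c, d) = (gmult S a c, gmult T b d)"
  by (simp_all add: sgd_prod_def)

lemma divides_prodS: "divides (prodS S T) (sgd_prod S T)"
  unfolding divides_def
  apply (rule exI[of _ prod_decode], rule exI[of _ "\<lambda>e. {prod_decode e}"])
  apply auto
  done

lemma hom_prodS_fst:
  "is_hom (prodS S T) S (\<lambda>v. fst (prod_decode v)) (\<lambda>e. fst (prod_decode e))"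
  unfolding is_hom_def by auto

lemma hom_prodS_snd:
  "is_hom (prodS S T) T (\<lambda>v. snd (prod_decode v)) (\<lambda>e. snd (prod_decode e))"
  unfolding is_hom_def by auto

lemma hom_prodS_pair:
  assumes "is_hom F S fv fe" "is_hom F T gv ge"
  shows "is_hom F (prodS S T) (\<lambda>v. prod_encode (fv v, gv v)) (\<lambda>w. prod_encode (fe w, ge w))"
  using assms unfolding is_hom_def by auto

lemma prod_idx:
  assumes V: "pseudovariety V" and i: "valid_idx V A (S, fv, fe)" and j: "valid_idx V A (T, gv, ge)"
  shows "valid_idx V A (prodS S T, \<lambda>v. prod_encode (fv v, gv v), \<lambda>w. prod_encode (fe w, ge w))"
    "refines V A (prodS S T, \<lambda>v. prod_encode (fv v, gv v), \<lambda>w. prod_encode (fe w, ge w)) (S, fv, fe)"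
    "refines V A (prodS S T, \<lambda>v. prod_encode (fv v, gv v), \<lambda>w. prod_encode (fe w, ge w)) (T, gv, ge)"
proof -
  have SV: "S \<in> V" "T \<in> V" "is_hom (free_sgd A) S fv fe" "is_hom (free_sgd A) T gv ge"
    using i j unfolding valid_idx_def by auto
  have "finite_sgd S" "finite_sgd T" using SV V pv_finite by auto
  then have "finite_sgd (prodS S T)" by (rule finite_prodS)
  then have "prodS S T \<in> V" using pv_prod[OF V _ SV(1,2) divides_prodS] by blast
  then show v: "valid_idx V A (prodS S T, \<lambda>v. prod_encode (fv v, gv v), \<lambda>w. prod_encode (fe w, ge w))"
    unfolding valid_idx_def using hom_prodS_pair[OF SV(3,4)] by simp
  show "refines V A (prodS S T, \<lambda>v. prod_encode (fv v, gv v), \<lambda>w. prod_encode (fe w, ge w)) (S, fv, fe)"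
    unfolding refines_def using v i hom_prodS_fst[of S T]
    by (intro conjI exI[of _ "\<lambda>v. fst (prod_decode v)"] exI[of _ "\<lambda>v. fst (prod_decode v)"]) auto
  show "refines V A (prodS S T, \<lambda>v. prod_encode (fv v, gv v), \<lambda>w. prod_encode (fe w, ge w)) (T, gv, ge)"
    unfolding refines_def using v j hom_prodS_snd[of S T]
    by (intro conjI exI[of _ "\<lambda>v. snd (prod_decode v)"] exI[of _ "\<lambda>v. snd (prod_decode v)"]) auto
qed

definition pairS :: "nat set \<Rightarrow> (nat, nat) sgd" where
  "pairS C = \<lparr> verts = C, edges = prod_encode ` (C \<times> C),
     src = (\<lambda>e. fst (prod_decode e)), rng = (\<lambda>e. snd (prod_decode e)),
     gmult = (\<lambda>e e'. prod_encode (fst (prod_decode e'), snd (prod_decode e))) \<rparr>"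

lemma pairS_simps [simp]:
  "verts (pairS C) = C" "edges (pairS C) = prod_encode ` (C \<times> C)"
  "src (pairS C) e = fst (prod_decode e)" "rng (pairS C) e = snd (prod_decode e)"
  "gmult (pairS C) e e' = prod_encode (fst (prod_decode e'), snd (prod_decode e))"
  by (simp_all add: pairS_def)

lemma finite_pairS: "finite C \<Longrightarrow> finite_sgd (pairS C)"
  unfolding finite_sgd_def is_sgd_def is_graph_def by auto

lemma divides_pairS: "divides (pairS C) sgd_trivial"
  unfolding divides_def sgd_trivial_def
  apply (rule exI[of _ "\<lambda>_. ()"], rule exI[of _ "\<lambda>_. {()}"])
  apply auto
  done

lemma hom_pairS:
  assumes "is_graph A" "cv ` verts A \<subseteq> C"
  shows "is_hom (free_sgd A) (pairS C) cv (\<lambda>w. prod_encode (cv (src A (last w)), cv (rng A (hd w))))"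
proof -
  have ne: "\<And>w. w \<in> edges (free_sgd A) \<Longrightarrow> w \<noteq> []" by (simp add: free_edges)
  show ?thesis
    using assms path_ends[OF assms(1)] ne unfolding is_hom_def
    by (auto intro!: imageI simp: image_subset_iff)
qed

lemma sep_idx:
  assumes V: "pseudovariety V" and A: "finite_graph A"
  shows "\<exists>S fv fe. valid_idx V A (S, fv, fe) \<and> inj_on fv (verts A)"
proof -
  obtain cv :: "'a \<Rightarrow> nat" where cv: "inj_on cv (verts A)"
    using A unfolding finite_graph_def by (meson finite_imp_inj_to_nat_seg)
  have g: "is_graph A" "finite (verts A)" using A unfolding finite_graph_def by auto
  have "finite_sgd (pairS (cv ` verts A))" using g by (simp add: finite_pairS)
  then have "pairS (cv ` verts A) \<in> V" using pv_triv[OF V _ divides_pairS] by blast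
  then show ?thesis using cv hom_pairS[OF g(1) order_refl] unfolding valid_idx_def by blast
qed

definition imgS :: "(nat, nat) sgd \<Rightarrow> ('v \<Rightarrow> nat) \<Rightarrow> ('e list \<Rightarrow> nat) \<Rightarrow> ('v, 'e, 'z) graph_scheme \<Rightarrow> (nat, nat) sgd" where
  "imgS S fv fe A = \<lparr> verts = fv ` verts A, edges = fe ` edges (free_sgd A),
     src = src S, rng = rng S, gmult = gmult S \<rparr>"

lemma imgS_simps [simp]:
  "verts (imgS S fv fe A) = fv ` verts A" "edges (imgS S fv fe A) = fe ` edges (free_sgd A)"
  "src (imgS S fv fe A) = src S" "rng (imgS S fv fe A) = rng S" "gmult (imgS S fv fe A) = gmult S"
  by (simp_all add: imgS_def)

lemma finite_imgS:
  assumes S: "finite_sgd S" and h: "is_hom (free_sgd A) S fv fe" and inj: "inj_on fv (verts A)"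
    and A: "is_graph A"
  shows "finite_sgd (imgS S fv fe A)"
proof -
  have sub: "fv ` verts A \<subseteq> verts S" "fe ` edges (free_sgd A) \<subseteq> edges S"
    using h unfolding is_hom_def by auto
  have gr: "is_graph (imgS S fv fe A)"
    unfolding is_graph_def using h A path_ends[OF A]
    by (auto simp: hom_edge)
  have cl: "\<And>a b. a \<in> edges (free_sgd A) \<Longrightarrow> b \<in> edges (free_sgd A) \<Longrightarrow> src S (fe a) = rng S (fe b) \<Longrightarrow>
     gmult S (fe a) (fe b) \<in> fe ` edges (free_sgd A)"
  proof -
    fix a b assume ab: "a \<in> edges (free_sgd A)" "b \<in> edges (free_sgd A)" "src S (fe a) = rng S (fe b)"
    then have "fv (src A (last a)) = fv (rng A (hd b))" using hom_edge[OF h] by simp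
    moreover have "src A (last a) \<in> verts A" "rng A (hd b) \<in> verts A"
      using ab path_ends[OF A] by auto
    ultimately have e: "src A (last a) = rng A (hd b)" using inj by (meson inj_onD)
    then have "a @ b \<in> edges (free_sgd A)" using ab path_append by blast
    moreover have "fe (a @ b) = gmult S (fe a) (fe b)" using hom_append[OF h ab(1,2) e] .
    ultimately show "gmult S (fe a) (fe b) \<in> fe ` edges (free_sgd A)" by (metis image_eqI)
  qed
  have "is_sgd (imgS S fv fe A)"
    unfolding is_sgd_def using gr S sub cl unfolding finite_sgd_def is_sgd_def
    by (simp add: image_subset_iff)
  then show ?thesis unfolding finite_sgd_def using S sub unfolding finite_sgd_def
    by (auto intro: finite_subset)
qed

lemma divides_imgS:
  assumes "is_hom (free_sgd A) S fv fe"
  shows "divides (imgS S fv fe A) S"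
  unfolding divides_def
  apply (rule exI[of _ id], rule exI[of _ "\<lambda>e. {e}"])
  using assms unfolding is_hom_def by auto

lemma word_rep:
  assumes V: "pseudovariety V" and A: "is_graph A" and i: "valid_idx V A (S, fv, fe)"
    and inj: "inj_on fv (verts A)" and p: "pro_elem V A (s, r, x)"
  shows "\<exists>w\<in>edges (free_sgd A). fe w = x (S, fv, fe) \<and> src A (last w) = s \<and> rng A (hd w) = r"
proof -
  have SV: "S \<in> V" and h: "is_hom (free_sgd A) S fv fe" using i unfolding valid_idx_def by auto
  have "finite_sgd S" using SV V pv_finite by auto
  then have "finite_sgd (imgS S fv fe A)" using finite_imgS h inj A by blast
  then have IV: "imgS S fv fe A \<in> V" using pv_div[OF V _ SV divides_imgS[OF h]] by blast
  have h2: "is_hom (free_sgd A) (imgS S fv fe A) fv fe" using h unfolding is_hom_def by auto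
  have vk: "valid_idx V A (imgS S fv fe A, fv, fe)" using IV h2 unfolding valid_idx_def by auto
  have hid: "is_hom (imgS S fv fe A) S id id" using h unfolding is_hom_def by auto
  have ref: "refines V A (imgS S fv fe A, fv, fe) (S, fv, fe)"
    unfolding refines_def using vk i hid by (intro conjI exI[of _ id]) auto
  have "x (S, fv, fe) = id (x (imgS S fv fe A, fv, fe))"
    using pro_compat0[OF p vk i hid] by simp
  moreover have "x (imgS S fv fe A, fv, fe) \<in> fe ` edges (free_sgd A)"
    using pro_elemD(1)[OF p vk] by simp
  ultimately obtain w where w: "w \<in> edges (free_sgd A)" "fe w = x (S, fv, fe)" by auto
  have "fv (src A (last w)) = fv s" "fv (rng A (hd w)) = fv r"
    using hom_edge[OF h w(1)] pro_elemD[OF p i] w(2) by auto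
  moreover have "src A (last w) \<in> verts A" "rng A (hd w) \<in> verts A" "s \<in> verts A" "r \<in> verts A"
    using path_ends[OF A w(1)] pro_elem_verts[OF p] by auto
  ultimately show ?thesis using w inj by (meson inj_onD)
qed


definition graph_hom :: "('a, 'b, 'z) graph_scheme \<Rightarrow> ('c, 'd, 'y) graph_scheme \<Rightarrow> ('a \<Rightarrow> 'c) \<Rightarrow> ('b \<Rightarrow> 'd) \<Rightarrow> bool" where
  "graph_hom A B cv ce \<longleftrightarrow> (\<forall>v\<in>verts A. cv v \<in> verts B) \<and>
     (\<forall>e\<in>edges A. ce e \<in> edges B \<and> src B (ce e) = cv (src A e) \<and> rng B (ce e) = cv (rng A e))"

lemma map_path:
  assumes g: "graph_hom A B cv ce" and w: "w \<in> edges (free_sgd A)"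
  shows "map ce w \<in> edges (free_sgd B)"
proof -
  have w': "w \<noteq> []" "set w \<subseteq> edges A" "successively (\<lambda>a b. src A a = rng A b) w"
    using w unfolding free_edges by auto
  have "successively (\<lambda>a b. src B (ce a) = rng B (ce b)) w"
    using w'(3)
  proof (rule successively_mono)
    fix x y assume "x \<in> set w" "y \<in> set w" "src A x = rng A y"
    moreover have "x \<in> edges A" "y \<in> edges A" using calculation(1,2) w'(2) by auto
    ultimately show "src B (ce x) = rng B (ce y)" using g unfolding graph_hom_def by metis
  qed
  then show ?thesis using w' g unfolding free_edges graph_hom_def by (auto simp: successively_map)
qed

lemma map_path_ends:
  assumes g: "graph_hom A B cv ce" and w: "w \<in> edges (free_sgd A)"
  shows "src B (last (map ce w)) = cv (src A (last w))" "rng B (hd (map ce w)) = cv (rng A (hd w))"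
proof -
  have "w \<noteq> []" "hd w \<in> edges A" "last w \<in> edges A"
    using w last_in_set[of w] hd_in_set[of w] unfolding free_edges by auto
  then show "src B (last (map ce w)) = cv (src A (last w))" "rng B (hd (map ce w)) = cv (rng A (hd w))"
    using g unfolding graph_hom_def by (auto simp: last_map hd_map)
qed

lemma rec_pullback:
  assumes g: "graph_hom A B cv ce" and r: "recognizable V B L'"
  shows "recognizable V A {w \<in> edges (free_sgd A). map ce w \<in> L'}"
proof -
  obtain F fv fe where F: "F \<in> V" "is_hom (free_sgd B) F fv fe"
    and L': "L' = {w \<in> edges (free_sgd B). fe w \<in> fe ` L'}"
    using r unfolding recognizable_def by blast
  have h1: "\<forall>v\<in>verts (free_sgd A). (fv \<circ> cv) v \<in> verts F"
    using g F(2) unfolding graph_hom_def is_hom_def by auto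
  have h2: "\<forall>w\<in>edges (free_sgd A). (fe \<circ> map ce) w \<in> edges F \<and> src F ((fe \<circ> map ce) w) = (fv \<circ> cv) (src (free_sgd A) w) \<and>
         rng F ((fe \<circ> map ce) w) = (fv \<circ> cv) (rng (free_sgd A) w)"
  proof
    fix w assume w: "w \<in> edges (free_sgd A)"
    have "map ce w \<in> edges (free_sgd B)" by (rule map_path[OF g w])
    then show "(fe \<circ> map ce) w \<in> edges F \<and> src F ((fe \<circ> map ce) w) = (fv \<circ> cv) (src (free_sgd A) w) \<and>
         rng F ((fe \<circ> map ce) w) = (fv \<circ> cv) (rng (free_sgd A) w)"
      using hom_edge[OF F(2)] map_path_ends[OF g w] by auto
  qed
  have h3: "\<forall>s\<in>edges (free_sgd A). \<forall>t\<in>edges (free_sgd A). src (free_sgd A) s = rng (free_sgd A) t \<longrightarrow>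
     (fe \<circ> map ce) (gmult (free_sgd A) s t) = gmult F ((fe \<circ> map ce) s) ((fe \<circ> map ce) t)"
  proof (intro ballI impI)
    fix s t assume st: "s \<in> edges (free_sgd A)" "t \<in> edges (free_sgd A)" "src (free_sgd A) s = rng (free_sgd A) t"
    have "src B (last (map ce s)) = rng B (hd (map ce t))"
      using st map_path_ends[OF g st(1)] map_path_ends[OF g st(2)] by simp
    then show "(fe \<circ> map ce) (gmult (free_sgd A) s t) = gmult F ((fe \<circ> map ce) s) ((fe \<circ> map ce) t)"
      using hom_append[OF F(2) map_path[OF g st(1)] map_path[OF g st(2)]] by simp
  qed
  have h: "is_hom (free_sgd A) F (fv \<circ> cv) (fe \<circ> map ce)"
    unfolding is_hom_def using h1 h2 h3 by blast
  let ?L = "{w \<in> edges (free_sgd A). map ce w \<in> L'}"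
  have "?L = {w \<in> edges (free_sgd A). (fe \<circ> map ce) w \<in> (fe \<circ> map ce) ` ?L}"
  proof (intro equalityI subsetI)
    fix w assume "w \<in> {w \<in> edges (free_sgd A). (fe \<circ> map ce) w \<in> (fe \<circ> map ce) ` ?L}"
    then have w: "w \<in> edges (free_sgd A)" "fe (map ce w) \<in> fe ` L'" by auto
    then have "map ce w \<in> {w \<in> edges (free_sgd B). fe w \<in> fe ` L'}" using map_path[OF g w(1)] by auto
    then show "w \<in> ?L" using L' w(1) by auto
  qed auto
  then show ?thesis unfolding recognizable_def using F h by blast
qed

lemma concat_gen:
  fixes A :: "('v, 'e) graph"
  assumes cc: "concat_closed V" and A: "finite_graph A"
    and rL: "recognizable V A L" and rK: "recognizable V A K"
  shows "recognizable V A (concat A L K)"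
proof -
  obtain cv :: "'v \<Rightarrow> nat" where cv: "inj_on cv (verts A)"
    using A unfolding finite_graph_def by (meson finite_imp_inj_to_nat_seg)
  obtain ce :: "'e \<Rightarrow> nat" where ce: "inj_on ce (edges A)"
    using A unfolding finite_graph_def by (meson finite_imp_inj_to_nat_seg)
  define ice where "ice = inv_into (edges A) ce"
  define icv where "icv = inv_into (verts A) cv"
  define B :: "(nat, nat) graph" where "B = \<lparr> verts = cv ` verts A, edges = ce ` edges A,
     src = (\<lambda>n. cv (src A (ice n))), rng = (\<lambda>n. cv (rng A (ice n))) \<rparr>"
  have gA: "is_graph A" using A unfolding finite_graph_def by auto
  have ice_e: "\<And>e. e \<in> edges A \<Longrightarrow> ice (ce e) = e" unfolding ice_def using ce by simp
  have icv_v: "\<And>v. v \<in> verts A \<Longrightarrow> icv (cv v) = v" unfolding icv_def using cv by simp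
  have ice_in: "\<And>n. n \<in> ce ` edges A \<Longrightarrow> ice n \<in> edges A" unfolding ice_def by (auto simp: inv_into_into)
  have fB: "finite_graph B" using A ice_in unfolding finite_graph_def is_graph_def B_def by auto
  have g1: "graph_hom A B cv ce" unfolding graph_hom_def B_def using ice_e by auto
  have g2: "graph_hom B A icv ice" unfolding graph_hom_def B_def using ice_in icv_v gA
    unfolding is_graph_def by auto
  define LB where "LB = {w \<in> edges (free_sgd B). map ice w \<in> L}"
  define KB where "KB = {w \<in> edges (free_sgd B). map ice w \<in> K}"
  have "recognizable V B LB" unfolding LB_def by (rule rec_pullback[OF g2 rL])
  moreover have "recognizable V B KB" unfolding KB_def by (rule rec_pullback[OF g2 rK])
  ultimately have "recognizable V B (concat B LB KB)" using cc fB unfolding concat_closed_def by blast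
  then have R: "recognizable V A {w \<in> edges (free_sgd A). map ce w \<in> concat B LB KB}"
    by (rule rec_pullback[OF g1])
  have LP: "L \<subseteq> edges (free_sgd A)" "K \<subseteq> edges (free_sgd A)" using rL rK unfolding recognizable_def by auto
  have mm: "\<And>w. w \<in> edges (free_sgd A) \<Longrightarrow> map ice (map ce w) = w"
    using ice_e unfolding free_edges by (auto simp: map_idI subset_iff)
  have eq: "{w \<in> edges (free_sgd A). map ce w \<in> concat B LB KB} = concat A L K"
  proof (intro equalityI subsetI)
    fix w assume "w \<in> {w \<in> edges (free_sgd A). map ce w \<in> concat B LB KB}"
    then obtain a b where w: "w \<in> edges (free_sgd A)" "map ce w = a @ b" "a \<in> LB" "b \<in> KB"
      "src B (last a) = rng B (hd b)" unfolding concat_def by auto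
    have ab: "a \<in> edges (free_sgd B)" "b \<in> edges (free_sgd B)" "map ice a \<in> L" "map ice b \<in> K"
      using w(3,4) unfolding LB_def KB_def by auto
    have "w = map ice a @ map ice b" using mm[OF w(1)] w(2) by simp
    moreover have "src A (last (map ice a)) = rng A (hd (map ice b))"
    proof -
      have "icv (src B (last a)) = icv (rng B (hd b))" using w(5) by simp
      then show ?thesis using map_path_ends[OF g2 ab(1)] map_path_ends[OF g2 ab(2)] by simp
    qed
    ultimately show "w \<in> concat A L K" using ab unfolding concat_def by auto
  next
    fix w assume "w \<in> concat A L K"
    then obtain u v where w: "w = u @ v" "u \<in> L" "v \<in> K" "src A (last u) = rng A (hd v)"
      unfolding concat_def by auto
    have uv: "u \<in> edges (free_sgd A)" "v \<in> edges (free_sgd A)" using w LP by auto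
    have "w \<in> edges (free_sgd A)" using path_append[OF uv w(4)] w(1) by simp
    moreover have "map ce u \<in> LB" "map ce v \<in> KB"
      using map_path[OF g1 uv(1)] map_path[OF g1 uv(2)] mm[OF uv(1)] mm[OF uv(2)] w(2,3)
      unfolding LB_def KB_def by auto
    moreover have "src B (last (map ce u)) = rng B (hd (map ce v))"
      using map_path_ends[OF g1 uv(1)] map_path_ends[OF g1 uv(2)] w(4) by simp
    ultimately show "w \<in> {w \<in> edges (free_sgd A). map ce w \<in> concat B LB KB}"
      using w(1) unfolding concat_def by auto
  qed
  show ?thesis using R eq by simp
qed


definition word_elem :: "(nat, nat) sgd set \<Rightarrow> ('v, 'e, 'z) graph_scheme \<Rightarrow> 'e list \<Rightarrow> 'v \<times> 'v \<times> (('v, 'e) proidx \<Rightarrow> nat)" where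
  "word_elem V A w = (src A (last w), rng A (hd w), (\<lambda>i. if valid_idx V A i then snd (snd i) w else undefined))"

lemma word_elem_pro:
  assumes A: "is_graph A" and w: "w \<in> edges (free_sgd A)"
  shows "pro_elem V A (word_elem V A w)"
  unfolding pro_elem_def word_elem_def using w path_ends[OF A w] hom_edge[OF _ w]
  by (auto simp: valid_idx_def)

lemma refinesE:
  assumes "refines V A k i"
  obtains S fv fe T gv ge hv he where "k = (S, fv, fe)" "i = (T, gv, ge)"
    "valid_idx V A (S, fv, fe)" "valid_idx V A (T, gv, ge)" "is_hom S T hv he"
    "\<forall>v\<in>verts A. gv v = hv (fv v)" "\<forall>w\<in>edges (free_sgd A). ge w = he (fe w)"
  using assms unfolding refines_def by (cases k, cases i) auto

lemma hom_mult:
  assumes "is_hom S T hv he" "a \<in> edges S" "b \<in> edges S" "src S a = rng S b"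
  shows "he (gmult S a b) = gmult T (he a) (he b)"
  using assms unfolding is_hom_def by auto

lemma common_ref:
  assumes V: "pseudovariety V" and A: "finite_graph A"
    and F: "finite F" "\<forall>i\<in>F. valid_idx V A i"
  shows "\<exists>k. valid_idx V A k \<and> inj_on (fst (snd k)) (verts A) \<and> (\<forall>i\<in>F. refines V A k i)"
  using F
proof (induction F rule: finite_induct)
  case empty
  then show ?case using sep_idx[OF V A] by fastforce
next
  case (insert i F)
  then obtain k where k: "valid_idx V A k" "inj_on (fst (snd k)) (verts A)" "\<forall>i\<in>F. refines V A k i" by auto
  obtain S fv fe where kk: "k = (S, fv, fe)" by (cases k) auto
  obtain T gv ge where ii: "i = (T, gv, ge)" by (cases i) auto
  have vi: "valid_idx V A (T, gv, ge)" using insert ii by auto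
  note P = prod_idx[OF V k(1)[unfolded kk] vi]
  have "inj_on (\<lambda>v. prod_encode (fv v, gv v)) (verts A)"
    using k(2) unfolding kk inj_on_def by auto
  then show ?case using P k(3) refines_trans[OF P(2)] ii kk
    by (intro exI[of _ "(prodS S T, \<lambda>v. prod_encode (fv v, gv v), \<lambda>w. prod_encode (fe w, ge w))"]) auto
qed


lemma sep_ends:
  assumes A: "is_graph A" and i: "valid_idx V A (S, fv, fe)" and inj: "inj_on fv (verts A)"
    and p: "pro_elem V A (s, r, X)" and w: "w \<in> edges (free_sgd A)" and e: "fe w = X (S, fv, fe)"
  shows "src A (last w) = s" "rng A (hd w) = r"
proof -
  have h: "is_hom (free_sgd A) S fv fe" using i unfolding valid_idx_def by auto
  have "fv (src A (last w)) = fv s" "fv (rng A (hd w)) = fv r"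
    using hom_edge[OF h w] pro_elemD[OF p i] e by auto
  moreover have "src A (last w) \<in> verts A" "rng A (hd w) \<in> verts A" "s \<in> verts A" "r \<in> verts A"
    using path_ends[OF A w] pro_elem_verts[OF p] by auto
  ultimately show "src A (last w) = s" "rng A (hd w) = r" using inj by (meson inj_onD)+
qed

lemma prod_proj:
  assumes V: "pseudovariety V" and i: "valid_idx V A (S, fv, fe)" and j: "valid_idx V A (T, gv, ge)"
    and p: "pro_elem V A (s, r, X)"
  shows "X (S, fv, fe) = fst (prod_decode (X (prodS S T, \<lambda>v. prod_encode (fv v, gv v), \<lambda>w. prod_encode (fe w, ge w))))"
    "X (T, gv, ge) = snd (prod_decode (X (prodS S T, \<lambda>v. prod_encode (fv v, gv v), \<lambda>w. prod_encode (fe w, ge w))))"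
proof -
  note P = prod_idx[OF V i j]
  show "X (S, fv, fe) = fst (prod_decode (X (prodS S T, \<lambda>v. prod_encode (fv v, gv v), \<lambda>w. prod_encode (fe w, ge w))))"
    by (rule pro_compat0[OF p P(1) i hom_prodS_fst]) auto
  show "X (T, gv, ge) = snd (prod_decode (X (prodS S T, \<lambda>v. prod_encode (fv v, gv v), \<lambda>w. prod_encode (fe w, ge w))))"
    by (rule pro_compat0[OF p P(1) j hom_prodS_snd]) auto
qed

lemma prod_word:
  assumes V: "pseudovariety V" and A: "is_graph A" and i: "valid_idx V A (S, fv, fe)" and j: "valid_idx V A (T, gv, ge)"
    and inj: "inj_on fv (verts A)" and p: "pro_elem V A (s, r, X)"
  shows "\<exists>w\<in>edges (free_sgd A). fe w = X (S, fv, fe) \<and> ge w = X (T, gv, ge) \<and> src A (last w) = s \<and> rng A (hd w) = r"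
proof -
  note P = prod_idx[OF V i j]
  have inj2: "inj_on (\<lambda>v. prod_encode (fv v, gv v)) (verts A)" using inj unfolding inj_on_def by auto
  obtain w where w: "w \<in> edges (free_sgd A)"
    "prod_encode (fe w, ge w) = X (prodS S T, \<lambda>v. prod_encode (fv v, gv v), \<lambda>w. prod_encode (fe w, ge w))"
    "src A (last w) = s" "rng A (hd w) = r"
    using word_rep[OF V A P(1) inj2 p] by blast
  then show ?thesis using prod_proj[OF V i j p] by (metis fst_conv snd_conv prod_encode_inverse)
qed

definition Idc :: "('v, 'e) proidx \<Rightarrow> (('v, 'e) proidx \<Rightarrow> nat) \<Rightarrow> (('v, 'e) proidx \<Rightarrow> nat) \<Rightarrow> (('v, 'e) proidx \<Rightarrow> nat) \<Rightarrow> (('v, 'e) proidx \<Rightarrow> nat) \<Rightarrow> bool" where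
  "Idc i X1 X2 X3 X4 \<longleftrightarrow> X1 i = X3 i \<and> X2 i = X4 i"

definition T1 where
  "T1 V A s1 s3 X1 X2 X3 X4 i = {t. pro_elem V A (s3, s1, t) \<and> gmult (fst i) (X1 i) (t i) = X3 i \<and> X2 i = gmult (fst i) (t i) (X4 i)}"

definition T2 where
  "T2 V A s1 s3 X1 X2 X3 X4 i = {t. pro_elem V A (s1, s3, t) \<and> gmult (fst i) (X3 i) (t i) = X1 i \<and> X4 i = gmult (fst i) (t i) (X2 i)}"

locale eqd =
  fixes V :: "(nat, nat) sgd set" and A :: "('v, 'e) graph"
    and s1 r1 s2 r2 s3 r3 s4 r4 :: 'v and X1 X2 X3 X4 :: "('v, 'e) proidx \<Rightarrow> nat"
  assumes V: "pseudovariety V" and cc: "concat_closed V" and A: "finite_graph A"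
    and p1: "pro_elem V A (s1, r1, X1)" and p2: "pro_elem V A (s2, r2, X2)"
    and p3: "pro_elem V A (s3, r3, X3)" and p4: "pro_elem V A (s4, r4, X4)"
    and c12: "s1 = r2" and c34: "s3 = r4" and e24: "s2 = s4" and e13: "r1 = r3"
    and eq: "\<And>i. valid_idx V A i \<Longrightarrow> gmult (fst i) (X1 i) (X2 i) = gmult (fst i) (X3 i) (X4 i)"
begin

lemma gA: "is_graph A" using A unfolding finite_graph_def by auto

lemma mono:
  assumes r: "refines V A k i"
  shows "Idc k X1 X2 X3 X4 \<Longrightarrow> Idc i X1 X2 X3 X4"
    "T1 V A s1 s3 X1 X2 X3 X4 k \<subseteq> T1 V A s1 s3 X1 X2 X3 X4 i"
    "T2 V A s1 s3 X1 X2 X3 X4 k \<subseteq> T2 V A s1 s3 X1 X2 X3 X4 i"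
proof -
  obtain S fv fe T gv ge hv he where kk: "k = (S, fv, fe)" and ii: "i = (T, gv, ge)"
    and vk: "valid_idx V A (S, fv, fe)" and vi: "valid_idx V A (T, gv, ge)" and h: "is_hom S T hv he"
    and c1: "\<forall>v\<in>verts A. gv v = hv (fv v)" and c2: "\<forall>w\<in>edges (free_sgd A). ge w = he (fe w)"
    using r by (rule refinesE)
  have cp: "\<And>s r X. pro_elem V A (s, r, X) \<Longrightarrow> X (T, gv, ge) = he (X (S, fv, fe))"
    using pro_compat0[OF _ vk vi h c1 c2] by blast
  show "Idc k X1 X2 X3 X4 \<Longrightarrow> Idc i X1 X2 X3 X4"
    unfolding Idc_def kk ii using cp[OF p1] cp[OF p2] cp[OF p3] cp[OF p4] by simp
  show "T1 V A s1 s3 X1 X2 X3 X4 k \<subseteq> T1 V A s1 s3 X1 X2 X3 X4 i"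
  proof
    fix t assume "t \<in> T1 V A s1 s3 X1 X2 X3 X4 k"
    then have t: "pro_elem V A (s3, s1, t)" "gmult S (X1 (S, fv, fe)) (t (S, fv, fe)) = X3 (S, fv, fe)"
      "X2 (S, fv, fe) = gmult S (t (S, fv, fe)) (X4 (S, fv, fe))" unfolding T1_def kk by auto
    have "he (gmult S (X1 (S, fv, fe)) (t (S, fv, fe))) = gmult T (he (X1 (S, fv, fe))) (he (t (S, fv, fe)))"
      using hom_mult[OF h] pro_elemD[OF p1 vk] pro_elemD[OF t(1) vk] by auto
    moreover have "he (gmult S (t (S, fv, fe)) (X4 (S, fv, fe))) = gmult T (he (t (S, fv, fe))) (he (X4 (S, fv, fe)))"
      using hom_mult[OF h] pro_elemD[OF p4 vk] pro_elemD[OF t(1) vk] c34 by auto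
    ultimately show "t \<in> T1 V A s1 s3 X1 X2 X3 X4 i"
      unfolding T1_def ii using t cp[OF p1] cp[OF p2] cp[OF p3] cp[OF p4] cp[OF t(1)] by auto
  qed
  show "T2 V A s1 s3 X1 X2 X3 X4 k \<subseteq> T2 V A s1 s3 X1 X2 X3 X4 i"
  proof
    fix t assume "t \<in> T2 V A s1 s3 X1 X2 X3 X4 k"
    then have t: "pro_elem V A (s1, s3, t)" "gmult S (X3 (S, fv, fe)) (t (S, fv, fe)) = X1 (S, fv, fe)"
      "X4 (S, fv, fe) = gmult S (t (S, fv, fe)) (X2 (S, fv, fe))" unfolding T2_def kk by auto
    have "he (gmult S (X3 (S, fv, fe)) (t (S, fv, fe))) = gmult T (he (X3 (S, fv, fe))) (he (t (S, fv, fe)))"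
      using hom_mult[OF h] pro_elemD[OF p3 vk] pro_elemD[OF t(1) vk] by auto
    moreover have "he (gmult S (t (S, fv, fe)) (X2 (S, fv, fe))) = gmult T (he (t (S, fv, fe))) (he (X2 (S, fv, fe)))"
      using hom_mult[OF h] pro_elemD[OF p2 vk] pro_elemD[OF t(1) vk] c12 by auto
    ultimately show "t \<in> T2 V A s1 s3 X1 X2 X3 X4 i"
      unfolding T2_def ii using t cp[OF p1] cp[OF p2] cp[OF p3] cp[OF p4] cp[OF t(1)] by auto
  qed
qed

end


context eqd
begin

lemma key_sep:
  assumes j: "valid_idx V A (S, fv, fe)" and inj: "inj_on fv (verts A)"
  shows "Idc (S, fv, fe) X1 X2 X3 X4 \<or> T1 V A s1 s3 X1 X2 X3 X4 (S, fv, fe) \<noteq> {} \<or>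
         T2 V A s1 s3 X1 X2 X3 X4 (S, fv, fe) \<noteq> {}"
proof -
  let ?j = "(S, fv, fe)"
  have hS: "S \<in> V" "is_hom (free_sgd A) S fv fe" using j unfolding valid_idx_def by auto
  define L where "L = {w \<in> edges (free_sgd A). fe w = X1 ?j}"
  define K where "K = {w \<in> edges (free_sgd A). fe w = X2 ?j}"
  have rL: "recognizable V A L" unfolding recognizable_def
  proof (intro conjI)
    show "L \<subseteq> edges (free_sgd A)" unfolding L_def by auto
    show "\<exists>F fv' fe'. F \<in> V \<and> is_hom (free_sgd A) F fv' fe' \<and> L = {w \<in> edges (free_sgd A). fe' w \<in> fe' ` L}"
      by (rule exI[of _ S], rule exI[of _ fv], rule exI[of _ fe]) (auto simp: hS L_def)
  qed
  have rK: "recognizable V A K" unfolding recognizable_def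
  proof (intro conjI)
    show "K \<subseteq> edges (free_sgd A)" unfolding K_def by auto
    show "\<exists>F fv' fe'. F \<in> V \<and> is_hom (free_sgd A) F fv' fe' \<and> K = {w \<in> edges (free_sgd A). fe' w \<in> fe' ` K}"
      by (rule exI[of _ S], rule exI[of _ fv], rule exI[of _ fe]) (auto simp: hS K_def)
  qed
  have "recognizable V A (concat A L K)" by (rule concat_gen[OF cc A rL rK])
  then obtain T gv ge where hT: "T \<in> V" "is_hom (free_sgd A) T gv ge"
    and sat: "concat A L K = {w \<in> edges (free_sgd A). ge w \<in> ge ` concat A L K}"
    unfolding recognizable_def by blast
  have vT: "valid_idx V A (T, gv, ge)" using hT by (simp add: valid_idx_def)
  obtain w1 where w1: "w1 \<in> edges (free_sgd A)" "fe w1 = X1 ?j" "ge w1 = X1 (T, gv, ge)"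
    "src A (last w1) = s1" "rng A (hd w1) = r1" using prod_word[OF V gA j vT inj p1] by blast
  obtain w2 where w2: "w2 \<in> edges (free_sgd A)" "fe w2 = X2 ?j" "ge w2 = X2 (T, gv, ge)"
    "src A (last w2) = s2" "rng A (hd w2) = r2" using prod_word[OF V gA j vT inj p2] by blast
  obtain w3 where w3: "w3 \<in> edges (free_sgd A)" "fe w3 = X3 ?j" "ge w3 = X3 (T, gv, ge)"
    "src A (last w3) = s3" "rng A (hd w3) = r3" using prod_word[OF V gA j vT inj p3] by blast
  obtain w4 where w4: "w4 \<in> edges (free_sgd A)" "fe w4 = X4 ?j" "ge w4 = X4 (T, gv, ge)"
    "src A (last w4) = s4" "rng A (hd w4) = r4" using prod_word[OF V gA j vT inj p4] by blast
  have c3: "src A (last w3) = rng A (hd w4)" using w3 w4 c34 by simp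
  have c1: "src A (last w1) = rng A (hd w2)" using w1 w2 c12 by simp
  have w12: "w1 @ w2 \<in> concat A L K" unfolding concat_def L_def K_def free_sgd_simps
    using w1(1,2) w2(1,2) c1 by blast
  have w34: "w3 @ w4 \<in> edges (free_sgd A)" using path_append[OF w3(1) w4(1) c3] .
  have "ge (w3 @ w4) = gmult T (X3 (T, gv, ge)) (X4 (T, gv, ge))"
    using hom_append[OF hT(2) w3(1) w4(1) c3] w3 w4 by simp
  also have "\<dots> = gmult T (X1 (T, gv, ge)) (X2 (T, gv, ge))" using eq[OF vT] by simp
  also have "\<dots> = ge (w1 @ w2)" using hom_append[OF hT(2) w1(1) w2(1) c1] w1 w2 by simp
  finally have "ge (w3 @ w4) \<in> ge ` concat A L K" using w12 by auto
  then have "w3 @ w4 \<in> concat A L K" using w34 sat by blast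
  then obtain a b where ab: "w3 @ w4 = a @ b" "a \<in> L" "b \<in> K" "src A (last a) = rng A (hd b)"
    unfolding concat_def by auto
  have a: "a \<in> edges (free_sgd A)" "fe a = X1 ?j" and b: "b \<in> edges (free_sgd A)" "fe b = X2 ?j"
    using ab(2,3) unfolding L_def K_def by auto
  have ae: "src A (last a) = s1" "rng A (hd a) = r1" using sep_ends[OF gA j inj p1 a] by auto
  have ne: "a \<noteq> []" "b \<noteq> []" "w3 \<noteq> []" "w4 \<noteq> []" using a b w3 w4 by (auto simp: free_edges)
  obtain us where us: "(w3 = a @ us \<and> us @ w4 = b) \<or> (w3 @ us = a \<and> w4 = us @ b)"
    using ab(1) append_eq_append_conv2 by blast
  show ?thesis
  proof (cases "us = []")
    case True
    then have "w3 = a" "w4 = b" using us by auto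
    then have "Idc ?j X1 X2 X3 X4" unfolding Idc_def using a b w3 w4 by simp
    then show ?thesis by simp
  next
    case False
    have vj: "valid_idx V A ?j" by (rule j)
    from us show ?thesis
    proof
      assume h: "w3 = a @ us \<and> us @ w4 = b"
      have p1': "us \<in> edges (free_sgd A)" "src A (last a) = rng A (hd us)"
        using path_appendD[of a us A] w3(1) h ne False by auto
      have p2': "src A (last us) = rng A (hd w4)"
        using path_appendD[of us w4 A] b(1) h ne False by auto
      define t where "t = (\<lambda>i. if valid_idx V A i then snd (snd i) us else undefined)"
      have we: "word_elem V A us = (s3, s1, t)"
        unfolding word_elem_def t_def using h w3(4) ae(1) p1'(2) False by auto
      have tp: "pro_elem V A (s3, s1, t)" using word_elem_pro[OF gA p1'(1), of V] we by simp
      have tj: "t ?j = fe us" unfolding t_def using vj by simp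
      have "gmult S (X1 ?j) (t ?j) = X3 ?j"
        using hom_append[OF hS(2) a(1) p1'] tj a h w3 by simp
      moreover have "X2 ?j = gmult S (t ?j) (X4 ?j)"
        using hom_append[OF hS(2) p1'(1) w4(1) p2'] tj b h w4 by simp
      ultimately have "t \<in> T1 V A s1 s3 X1 X2 X3 X4 ?j" unfolding T1_def using tp by simp
      then show ?thesis by blast
    next
      assume h: "w3 @ us = a \<and> w4 = us @ b"
      have p1': "us \<in> edges (free_sgd A)" "src A (last w3) = rng A (hd us)"
        using path_appendD[of w3 us A] a(1) h ne False by auto
      have p2': "src A (last us) = rng A (hd b)"
        using path_appendD[of us b A] w4(1) h ne False by auto
      define t where "t = (\<lambda>i. if valid_idx V A i then snd (snd i) us else undefined)"
      have we: "word_elem V A us = (s1, s3, t)"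
        unfolding word_elem_def t_def using h w3(4) ae(1) p1'(2) False by auto
      have tp: "pro_elem V A (s1, s3, t)" using word_elem_pro[OF gA p1'(1), of V] we by simp
      have tj: "t ?j = fe us" unfolding t_def using vj by simp
      have "gmult S (X3 ?j) (t ?j) = X1 ?j"
        using hom_append[OF hS(2) w3(1) p1'] tj a h w3 by simp
      moreover have "X4 ?j = gmult S (t ?j) (X2 ?j)"
        using hom_append[OF hS(2) p1'(1) b(1) p2'] tj b h w4 by simp
      ultimately have "t \<in> T2 V A s1 s3 X1 X2 X3 X4 ?j" unfolding T2_def using tp by simp
      then show ?thesis by blast
    qed
  qed
qed

lemma key:
  assumes i: "valid_idx V A i"
  shows "Idc i X1 X2 X3 X4 \<or> T1 V A s1 s3 X1 X2 X3 X4 i \<noteq> {} \<or> T2 V A s1 s3 X1 X2 X3 X4 i \<noteq> {}"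
proof -
  obtain k where k: "valid_idx V A k" "inj_on (fst (snd k)) (verts A)" "refines V A k i"
    using common_ref[OF V A, of "{i}"] i by auto
  obtain S fv fe where kk: "k = (S, fv, fe)" by (cases k) auto
  have "Idc k X1 X2 X3 X4 \<or> T1 V A s1 s3 X1 X2 X3 X4 k \<noteq> {} \<or> T2 V A s1 s3 X1 X2 X3 X4 k \<noteq> {}"
    using key_sep[of S fv fe] k kk by simp
  then show ?thesis using mono[OF k(3)] by blast
qed

end


lemma closed_two:
  assumes "i \<in> I" "k \<in> I"
  shows "closedin (product_topology (\<lambda>i. discrete_topology (U i)) I)
     {f \<in> topspace (product_topology (\<lambda>i. discrete_topology (U i)) I). R (f i) (f k)}"
proof -
  let ?P = "product_topology (\<lambda>i. discrete_topology (U i)) I"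
  define C where "C = (\<lambda>a. {f \<in> topspace ?P. f i \<in> U i - {a}} \<union> {f \<in> topspace ?P. f k \<in> {b \<in> U k. R a b}})"
  have ci: "continuous_map ?P (discrete_topology (U i)) (\<lambda>f. f i)"
    using assms(1) by (rule continuous_map_product_projection)
  have ck: "continuous_map ?P (discrete_topology (U k)) (\<lambda>f. f k)"
    using assms(2) by (rule continuous_map_product_projection)
  have cC: "\<And>a. closedin ?P (C a)"
    unfolding C_def
    by (intro closedin_Un closedin_continuous_map_preimage[OF ci] closedin_continuous_map_preimage[OF ck]) auto
  have top: "\<And>f. f \<in> topspace ?P \<Longrightarrow> f i \<in> U i \<and> f k \<in> U k"
    using assms by (auto simp: PiE_iff)
  have "{f \<in> topspace ?P. R (f i) (f k)} = topspace ?P \<inter> \<Inter> (range C)"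
  proof (intro equalityI subsetI)
    fix f assume "f \<in> {f \<in> topspace ?P. R (f i) (f k)}"
    then show "f \<in> topspace ?P \<inter> \<Inter> (range C)" using top unfolding C_def by auto
  next
    fix f assume f: "f \<in> topspace ?P \<inter> \<Inter> (range C)"
    then have "f \<in> C (f i)" by auto
    then show "f \<in> {f \<in> topspace ?P. R (f i) (f k)}" using f unfolding C_def by auto
  qed
  moreover have "closedin ?P (topspace ?P \<inter> \<Inter> (range C))"
    using cC by (intro closedin_Int closedin_topspace closedin_Inter) auto
  ultimately show ?thesis by simp
qed

lemma closed_fam:
  assumes "\<And>c. c \<in> C \<Longrightarrow> ic c \<in> I \<and> kc c \<in> I"
  shows "closedin (product_topology (\<lambda>i. discrete_topology (U i)) I)
     {f \<in> topspace (product_topology (\<lambda>i. discrete_topology (U i)) I). \<forall>c\<in>C. R c (f (ic c)) (f (kc c))}"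
proof -
  let ?P = "product_topology (\<lambda>i. discrete_topology (U i)) I"
  have "{f \<in> topspace ?P. \<forall>c\<in>C. R c (f (ic c)) (f (kc c))} =
     \<Inter> (insert (topspace ?P) ((\<lambda>c. {f \<in> topspace ?P. R c (f (ic c)) (f (kc c))}) ` C))"
    by auto
  moreover have cc: "\<And>c. c \<in> C \<Longrightarrow> closedin ?P {f \<in> topspace ?P. R c (f (ic c)) (f (kc c))}"
    by (rule closed_two) (use assms in auto)
  moreover have "closedin ?P (\<Inter> (insert (topspace ?P) ((\<lambda>c. {f \<in> topspace ?P. R c (f (ic c)) (f (kc c))}) ` C)))"
    using cc closedin_topspace[of ?P] by (intro closedin_Inter) auto
  ultimately show ?thesis by simp
qed

definition PT :: "(nat, nat) sgd set \<Rightarrow> ('v, 'e, 'z) graph_scheme \<Rightarrow> (('v, 'e) proidx \<Rightarrow> nat) topology" where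
  "PT V A = product_topology (\<lambda>i. discrete_topology (edges (fst i))) {i. valid_idx V A i}"

lemma top_PT: "topspace (PT V A) = PiE {i. valid_idx V A i} (\<lambda>i. edges (fst i))"
  unfolding PT_def by simp

lemma compact_PT:
  assumes V: "pseudovariety V" shows "compact_space (PT V A)"
  unfolding PT_def compact_space_product_topology
proof (rule disjI2, rule ballI)
  fix i assume "i \<in> {i. valid_idx V A i}"
  then have "fst i \<in> V" unfolding valid_idx_def by (auto split: prod.splits)
  then have "finite (edges (fst i))" using pv_finite[OF V] unfolding finite_sgd_def by auto
  then show "compact_space (discrete_topology (edges (fst i)))" by (simp add: compact_space_discrete_topology)
qed

lemma E_eq:
  assumes "s \<in> verts A" "r \<in> verts A"
  shows "{f. pro_elem V A (s, r, f)} =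
    {f \<in> topspace (PT V A). \<forall>i\<in>{i. valid_idx V A i}. src (fst i) (f i) = fst (snd i) s \<and> rng (fst i) (f i) = fst (snd i) r} \<inter>
    {f \<in> topspace (PT V A). \<forall>c\<in>{(i, k, he). valid_idx V A i \<and> valid_idx V A k \<and> (\<exists>hv. is_hom (fst i) (fst k) hv he \<and>
        (\<forall>v\<in>verts A. fst (snd k) v = hv (fst (snd i) v)) \<and> (\<forall>w\<in>edges (free_sgd A). snd (snd k) w = he (snd (snd i) w)))}.
       f (fst (snd c)) = snd (snd c) (f (fst c))}"
  (is "?E = ?E1 \<inter> ?E2")
proof (intro equalityI subsetI)
  fix f assume "f \<in> ?E"
  then have p: "pro_elem V A (s, r, f)" by simp
  have pe: "\<And>i. valid_idx V A i \<Longrightarrow> f i \<in> edges (fst i) \<and> src (fst i) (f i) = fst (snd i) s \<and> rng (fst i) (f i) = fst (snd i) r"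
  proof -
    fix i assume "valid_idx V A i"
    moreover obtain S fv fe where "i = (S, fv, fe)" by (cases i) auto
    ultimately show "f i \<in> edges (fst i) \<and> src (fst i) (f i) = fst (snd i) s \<and> rng (fst i) (f i) = fst (snd i) r"
      using pro_elemD[OF p] by auto
  qed
  have un: "\<And>i. \<not> valid_idx V A i \<Longrightarrow> f i = undefined" using pro_elem_verts(3)[OF p] .
  have cp: "\<And>i k he hv. valid_idx V A i \<Longrightarrow> valid_idx V A k \<Longrightarrow> is_hom (fst i) (fst k) hv he \<Longrightarrow>
     (\<forall>v\<in>verts A. fst (snd k) v = hv (fst (snd i) v)) \<Longrightarrow> (\<forall>w\<in>edges (free_sgd A). snd (snd k) w = he (snd (snd i) w)) \<Longrightarrow>
     f k = he (f i)"
  proof -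
    fix i k he hv
    assume as: "valid_idx V A i" "valid_idx V A k" "is_hom (fst i) (fst k) hv he"
     "\<forall>v\<in>verts A. fst (snd k) v = hv (fst (snd i) v)" "\<forall>w\<in>edges (free_sgd A). snd (snd k) w = he (snd (snd i) w)"
    obtain S fv fe where i: "i = (S, fv, fe)" by (cases i) auto
    obtain T gv ge where k: "k = (T, gv, ge)" by (cases k) auto
    from as show "f k = he (f i)" using pro_compat0[OF p, of S fv fe T gv ge hv he] unfolding i k by simp
  qed
  have ft: "f \<in> topspace (PT V A)" unfolding top_PT using pe un by (auto simp: PiE_iff extensional_def)
  show "f \<in> ?E1 \<inter> ?E2"
  proof (intro IntI CollectI)
    show "f \<in> topspace (PT V A) \<and> (\<forall>i\<in>{i. valid_idx V A i}. src (fst i) (f i) = fst (snd i) s \<and> rng (fst i) (f i) = fst (snd i) r)"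
      using ft pe by auto
    show "f \<in> topspace (PT V A) \<and> (\<forall>c\<in>{(i, k, he). valid_idx V A i \<and> valid_idx V A k \<and> (\<exists>hv. is_hom (fst i) (fst k) hv he \<and>
        (\<forall>v\<in>verts A. fst (snd k) v = hv (fst (snd i) v)) \<and> (\<forall>w\<in>edges (free_sgd A). snd (snd k) w = he (snd (snd i) w)))}.
       f (fst (snd c)) = snd (snd c) (f (fst c)))"
    proof (rule conjI[OF ft], rule ballI)
      fix c assume "c \<in> {(i, k, he). valid_idx V A i \<and> valid_idx V A k \<and> (\<exists>hv. is_hom (fst i) (fst k) hv he \<and>
        (\<forall>v\<in>verts A. fst (snd k) v = hv (fst (snd i) v)) \<and> (\<forall>w\<in>edges (free_sgd A). snd (snd k) w = he (snd (snd i) w)))}"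
      then obtain i k he hv where "c = (i, k, he)" "valid_idx V A i" "valid_idx V A k" "is_hom (fst i) (fst k) hv he"
       "\<forall>v\<in>verts A. fst (snd k) v = hv (fst (snd i) v)" "\<forall>w\<in>edges (free_sgd A). snd (snd k) w = he (snd (snd i) w)"
        by blast
      then show "f (fst (snd c)) = snd (snd c) (f (fst c))" using cp by simp
    qed
  qed
next
  fix f assume f: "f \<in> ?E1 \<inter> ?E2"
  then have ft: "f \<in> PiE {i. valid_idx V A i} (\<lambda>i. edges (fst i))" unfolding top_PT by auto
  have e1: "\<And>i. valid_idx V A i \<Longrightarrow> src (fst i) (f i) = fst (snd i) s \<and> rng (fst i) (f i) = fst (snd i) r"
    using f by auto
  have f2: "f \<in> ?E2" using f by (rule IntD2)
  have allC: "\<forall>c\<in>{(i, k, he). valid_idx V A i \<and> valid_idx V A k \<and> (\<exists>hv. is_hom (fst i) (fst k) hv he \<and>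
        (\<forall>v\<in>verts A. fst (snd k) v = hv (fst (snd i) v)) \<and> (\<forall>w\<in>edges (free_sgd A). snd (snd k) w = he (snd (snd i) w)))}.
       f (fst (snd c)) = snd (snd c) (f (fst c))"
    using f2 unfolding mem_Collect_eq by (elim conjE)
  have e2: "\<And>i k he hv. valid_idx V A i \<Longrightarrow> valid_idx V A k \<Longrightarrow> is_hom (fst i) (fst k) hv he \<Longrightarrow>
     (\<forall>v\<in>verts A. fst (snd k) v = hv (fst (snd i) v)) \<Longrightarrow> (\<forall>w\<in>edges (free_sgd A). snd (snd k) w = he (snd (snd i) w)) \<Longrightarrow>
     f k = he (f i)"
  proof -
    fix i k he hv
    assume "valid_idx V A i" "valid_idx V A k" "is_hom (fst i) (fst k) hv he"
     "\<forall>v\<in>verts A. fst (snd k) v = hv (fst (snd i) v)" "\<forall>w\<in>edges (free_sgd A). snd (snd k) w = he (snd (snd i) w)"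
    then have "(i, k, he) \<in> {(i, k, he). valid_idx V A i \<and> valid_idx V A k \<and> (\<exists>hv. is_hom (fst i) (fst k) hv he \<and>
        (\<forall>v\<in>verts A. fst (snd k) v = hv (fst (snd i) v)) \<and> (\<forall>w\<in>edges (free_sgd A). snd (snd k) w = he (snd (snd i) w)))}"
      unfolding mem_Collect_eq prod.case by blast
    from bspec[OF allC this] show "f k = he (f i)" by simp
  qed
  have "pro_elem V A (s, r, f)" unfolding pro_elem_def prod.case
  proof (intro conjI allI impI)
    show "s \<in> verts A" "r \<in> verts A" by (rule assms(1), rule assms(2))
    fix i assume "\<not> valid_idx V A i" then show "f i = undefined" using PiE_arb[OF ft] by simp
  next
    fix S fv fe assume v: "valid_idx V A (S, fv, fe)"
    show "f (S, fv, fe) \<in> edges S" using ft v by (auto simp: PiE_iff)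
    show "src S (f (S, fv, fe)) = fv s" "rng S (f (S, fv, fe)) = fv r" using e1[OF v] by auto
  next
    fix S fv fe T gv ge hv he
    assume "valid_idx V A (S, fv, fe) \<and> valid_idx V A (T, gv, ge) \<and> is_hom S T hv he \<and>
        (\<forall>v\<in>verts A. gv v = hv (fv v)) \<and> (\<forall>w\<in>edges (free_sgd A). ge w = he (fe w))"
    then show "f (T, gv, ge) = he (f (S, fv, fe))" using e2[of "(S, fv, fe)" "(T, gv, ge)" hv he] by auto
  qed
  then show "f \<in> ?E" by simp
qed

lemma closed_E:
  assumes "s \<in> verts A" "r \<in> verts A"
  shows "closedin (PT V A) {f. pro_elem V A (s, r, f)}"
proof -
  have c1: "closedin (PT V A) {f \<in> topspace (PT V A). \<forall>i\<in>{i. valid_idx V A i}. src (fst i) (f i) = fst (snd i) s \<and> rng (fst i) (f i) = fst (snd i) r}"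
    unfolding PT_def
    by (rule closed_fam[where ic = "\<lambda>i. i" and kc = "\<lambda>i. i" and R = "\<lambda>i a b. src (fst i) a = fst (snd i) s \<and> rng (fst i) a = fst (snd i) r"]) simp
  have c2: "closedin (PT V A) {f \<in> topspace (PT V A). \<forall>c\<in>{(i, k, he). valid_idx V A i \<and> valid_idx V A k \<and> (\<exists>hv. is_hom (fst i) (fst k) hv he \<and>
        (\<forall>v\<in>verts A. fst (snd k) v = hv (fst (snd i) v)) \<and> (\<forall>w\<in>edges (free_sgd A). snd (snd k) w = he (snd (snd i) w)))}.
       f (fst (snd c)) = snd (snd c) (f (fst c))}"
    unfolding PT_def
    by (rule closed_fam[where ic = "\<lambda>c. fst c" and kc = "\<lambda>c. fst (snd c)" and R = "\<lambda>c a b. b = snd (snd c) a"]) auto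
  show ?thesis unfolding E_eq[OF assms] using c1 c2 by (rule closedin_Int)
qed

lemma compact_T:
  assumes V: "pseudovariety V" and sr: "s \<in> verts A" "r \<in> verts A"
    and fip: "\<forall>G. finite G \<and> G \<subseteq> {i. valid_idx V A i} \<longrightarrow> (\<exists>t. pro_elem V A (s, r, t) \<and> (\<forall>i\<in>G. B i (t i)))"
  shows "\<exists>t. pro_elem V A (s, r, t) \<and> (\<forall>i. valid_idx V A i \<longrightarrow> B i (t i))"
proof -
  let ?E = "{f. pro_elem V A (s, r, f)}"
  let ?I = "{i. valid_idx V A i}"
  have cE: "compactin (PT V A) ?E" by (rule closedin_compact_space[OF compact_PT[OF V] closed_E[OF sr]])
  define U where "U = (\<lambda>i. {f \<in> topspace (PT V A). B i (f i)}) ` ?I"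
  have cU: "\<forall>C\<in>U. closedin (PT V A) C"
  proof
    fix C assume "C \<in> U"
    then obtain i where i: "i \<in> ?I" "C = {f \<in> topspace (PT V A). B i (f i)}" unfolding U_def by blast
    show "closedin (PT V A) C" unfolding i(2) PT_def
      by (rule closed_two[where R = "\<lambda>a b. B i a", OF i(1) i(1)])
  qed
  have Esub: "?E \<subseteq> topspace (PT V A)" using closedin_subset[OF closed_E[OF sr]] .
  have "\<forall>F. finite F \<and> F \<subseteq> U \<longrightarrow> ?E \<inter> \<Inter>F \<noteq> {}"
  proof (intro allI impI)
    fix F assume F: "finite F \<and> F \<subseteq> U"
    then obtain G where G: "G \<subseteq> ?I" "finite G" "F = (\<lambda>i. {f \<in> topspace (PT V A). B i (f i)}) ` G"
      unfolding U_def by (meson finite_subset_image)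
    obtain t where t: "pro_elem V A (s, r, t)" "\<forall>i\<in>G. B i (t i)"
      using fip[rule_format, OF conjI[OF G(2) G(1)]] by blast
    have "t \<in> ?E" using t(1) by simp
    moreover have "t \<in> \<Inter>F" unfolding G(3) using t(1) t(2) Esub by auto
    ultimately show "?E \<inter> \<Inter>F \<noteq> {}" by blast
  qed
  then have "?E \<inter> \<Inter>U \<noteq> {}"
    using conjunct2[OF cE[unfolded compactin_fip], rule_format, OF conjI[OF cU]] by blast
  then obtain t where t: "t \<in> ?E" "t \<in> \<Inter>U" by blast
  have "\<forall>i. valid_idx V A i \<longrightarrow> B i (t i)"
  proof (intro allI impI)
    fix i assume "valid_idx V A i"
    then have "{f \<in> topspace (PT V A). B i (f i)} \<in> U" unfolding U_def by blast
    from InterD[OF t(2) this] show "B i (t i)" by simp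
  qed
  then show ?thesis using t(1) by blast
qed


lemma free_pro_simps [simp]:
  "verts (free_pro V A) = verts A" "edges (free_pro V A) = {p. pro_elem V A p}"
  "src (free_pro V A) (s, r, x) = s" "rng (free_pro V A) (s, r, x) = r"
  "gmult (free_pro V A) (s, r, x) (s', r', y) =
     (s', r, (\<lambda>i. if valid_idx V A i then gmult (fst i) (x i) (y i) else undefined))"
  by (simp_all add: free_pro_def)

lemma sgd_I_simps [simp]:
  "edges (sgd_I S) = Inl ` edges S \<union> Inr ` verts S"
  "src (sgd_I S) (Inl e) = src S e" "src (sgd_I S) (Inr v) = v"
  "rng (sgd_I S) (Inl e) = rng S e" "rng (sgd_I S) (Inr v) = v"
  "gmult (sgd_I S) (Inl a) (Inl b) = Inl (gmult S a b)"
  "gmult (sgd_I S) (Inl a) (Inr v) = Inl a"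
  "gmult (sgd_I S) (Inr v) z = z"
  by (simp_all add: sgd_I_def)

context eqd
begin

lemma final:
  "(X1 = X3 \<and> X2 = X4 \<and> s1 = s3) \<or>
   (\<exists>t. pro_elem V A (s3, s1, t) \<and> (\<forall>i. valid_idx V A i \<longrightarrow> gmult (fst i) (X1 i) (t i) = X3 i \<and> X2 i = gmult (fst i) (t i) (X4 i))) \<or>
   (\<exists>t. pro_elem V A (s1, s3, t) \<and> (\<forall>i. valid_idx V A i \<longrightarrow> gmult (fst i) (X3 i) (t i) = X1 i \<and> X4 i = gmult (fst i) (t i) (X2 i)))"
proof (cases "\<forall>i. valid_idx V A i \<longrightarrow> Idc i X1 X2 X3 X4")
  case True
  have "X1 = X3"
  proof
    fix i show "X1 i = X3 i"
      using True pro_elem_verts(3)[OF p1] pro_elem_verts(3)[OF p3] unfolding Idc_def by metis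
  qed
  moreover have "X2 = X4"
  proof
    fix i show "X2 i = X4 i"
      using True pro_elem_verts(3)[OF p2] pro_elem_verts(3)[OF p4] unfolding Idc_def by metis
  qed
  moreover have "s1 = s3"
  proof -
    obtain S fv fe where v: "valid_idx V A (S, fv, fe)" and inj: "inj_on fv (verts A)"
      using sep_idx[OF V A] by blast
    have "fv s1 = fv s3" using pro_elemD(2)[OF p1 v] pro_elemD(2)[OF p3 v] calculation(1) by simp
    then show ?thesis using inj pro_elem_verts(1)[OF p1] pro_elem_verts(1)[OF p3] by (meson inj_onD)
  qed
  ultimately show ?thesis by blast
next
  case False
  then obtain i0 where i0: "valid_idx V A i0" "\<not> Idc i0 X1 X2 X3 X4" by blast
  define B1 where "B1 = (\<lambda>i a. gmult (fst i) (X1 i) a = X3 i \<and> X2 i = gmult (fst i) a (X4 i))"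
  define B2 where "B2 = (\<lambda>i a. gmult (fst i) (X3 i) a = X1 i \<and> X4 i = gmult (fst i) a (X2 i))"
  have T1e: "\<And>i. T1 V A s1 s3 X1 X2 X3 X4 i = {t. pro_elem V A (s3, s1, t) \<and> B1 i (t i)}"
    unfolding T1_def B1_def by auto
  have T2e: "\<And>i. T2 V A s1 s3 X1 X2 X3 X4 i = {t. pro_elem V A (s1, s3, t) \<and> B2 i (t i)}"
    unfolding T2_def B2_def by auto
  have fip: "(\<forall>G. finite G \<and> G \<subseteq> {i. valid_idx V A i} \<longrightarrow> (\<exists>t. pro_elem V A (s3, s1, t) \<and> (\<forall>i\<in>G. B1 i (t i)))) \<or>
     (\<forall>G. finite G \<and> G \<subseteq> {i. valid_idx V A i} \<longrightarrow> (\<exists>t. pro_elem V A (s1, s3, t) \<and> (\<forall>i\<in>G. B2 i (t i))))"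
  proof (rule ccontr)
    assume nt: "\<not> ?thesis"
    then have n1: "\<not> (\<forall>G. finite G \<and> G \<subseteq> {i. valid_idx V A i} \<longrightarrow> (\<exists>t. pro_elem V A (s3, s1, t) \<and> (\<forall>i\<in>G. B1 i (t i))))"
      by (rule contrapos_nn) (rule disjI1)
    from nt have n2: "\<not> (\<forall>G. finite G \<and> G \<subseteq> {i. valid_idx V A i} \<longrightarrow> (\<exists>t. pro_elem V A (s1, s3, t) \<and> (\<forall>i\<in>G. B2 i (t i))))"
      by (rule contrapos_nn) (rule disjI2)
    from n1 obtain G1 where G1a: "finite G1" "G1 \<subseteq> {i. valid_idx V A i}"
        "\<not> (\<exists>t. pro_elem V A (s3, s1, t) \<and> (\<forall>i\<in>G1. B1 i (t i)))" by blast
    from n2 obtain G2 where G2a: "finite G2" "G2 \<subseteq> {i. valid_idx V A i}"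
        "\<not> (\<exists>t. pro_elem V A (s1, s3, t) \<and> (\<forall>i\<in>G2. B2 i (t i)))" by blast
    have G13: "\<And>t. pro_elem V A (s3, s1, t) \<Longrightarrow> \<exists>i\<in>G1. \<not> B1 i (t i)" using G1a(3) by blast
    have G23: "\<And>t. pro_elem V A (s1, s3, t) \<Longrightarrow> \<exists>i\<in>G2. \<not> B2 i (t i)" using G2a(3) by blast
    have fin: "finite (insert i0 (G1 \<union> G2))" using G1a(1) G2a(1) by simp
    have val: "\<forall>i\<in>insert i0 (G1 \<union> G2). valid_idx V A i" using G1a(2) G2a(2) i0(1) by blast
    obtain k where k: "valid_idx V A k" "\<forall>i\<in>insert i0 (G1 \<union> G2). refines V A k i"
      using common_ref[OF V A fin val] by blast
    from key[OF k(1)] show False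
    proof (elim disjE)
      assume "Idc k X1 X2 X3 X4"
      then show False using mono(1)[of k i0] k(2) i0(2) by blast
    next
      assume "T1 V A s1 s3 X1 X2 X3 X4 k \<noteq> {}"
      then obtain t where t: "t \<in> T1 V A s1 s3 X1 X2 X3 X4 k" by blast
      have all: "\<forall>i\<in>G1. t \<in> T1 V A s1 s3 X1 X2 X3 X4 i" using mono(2) k(2) t by blast
      have "pro_elem V A (s3, s1, t)" using t unfolding T1e by simp
      then obtain i where "i \<in> G1" "\<not> B1 i (t i)" using G13 by blast
      then show False using all unfolding T1e by blast
    next
      assume "T2 V A s1 s3 X1 X2 X3 X4 k \<noteq> {}"
      then obtain t where t: "t \<in> T2 V A s1 s3 X1 X2 X3 X4 k" by blast
      have all: "\<forall>i\<in>G2. t \<in> T2 V A s1 s3 X1 X2 X3 X4 i" using mono(3) k(2) t by blast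
      have "pro_elem V A (s1, s3, t)" using t unfolding T2e by simp
      then obtain i where "i \<in> G2" "\<not> B2 i (t i)" using G23 by blast
      then show False using all unfolding T2e by blast
    qed
  qed
  have vs: "s1 \<in> verts A" "s3 \<in> verts A" using pro_elem_verts[OF p1] pro_elem_verts[OF p3] by auto
  from fip show ?thesis
  proof
    assume "\<forall>G. finite G \<and> G \<subseteq> {i. valid_idx V A i} \<longrightarrow> (\<exists>t. pro_elem V A (s3, s1, t) \<and> (\<forall>i\<in>G. B1 i (t i)))"
    from compact_T[OF V vs(2) vs(1) this] show ?thesis unfolding B1_def by blast
  next
    assume "\<forall>G. finite G \<and> G \<subseteq> {i. valid_idx V A i} \<longrightarrow> (\<exists>t. pro_elem V A (s1, s3, t) \<and> (\<forall>i\<in>G. B2 i (t i)))"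
    from compact_T[OF V vs(1) vs(2) this] show ?thesis unfolding B2_def by blast
  qed
qed

end

theorem mainTheorem12:
  fixes V :: "(nat, nat) sgd set"
  assumes "pseudovariety V"
    and "concat_closed V"
  shows "\<forall>A :: ('v, 'e) graph. finite_graph A \<longrightarrow> equidivisible (free_pro V A)"
proof (intro allI impI)
  fix A :: "('v, 'e) graph" assume A: "finite_graph A"
  show "equidivisible (free_pro V A)"
    unfolding equidivisible_def
  proof (intro ballI impI)
    fix u v x y
    assume mem: "u \<in> edges (free_pro V A)" "v \<in> edges (free_pro V A)" "x \<in> edges (free_pro V A)" "y \<in> edges (free_pro V A)"
      and h: "src (free_pro V A) u = rng (free_pro V A) v \<and> src (free_pro V A) x = rng (free_pro V A) y \<and>
        gmult (free_pro V A) u v = gmult (free_pro V A) x y"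
    obtain s1 r1 X1 where u: "u = (s1, r1, X1)" by (cases u) auto
    obtain s2 r2 X2 where v: "v = (s2, r2, X2)" by (cases v) auto
    obtain s3 r3 X3 where x: "x = (s3, r3, X3)" by (cases x) auto
    obtain s4 r4 X4 where y: "y = (s4, r4, X4)" by (cases y) auto
    have p: "pro_elem V A (s1, r1, X1)" "pro_elem V A (s2, r2, X2)" "pro_elem V A (s3, r3, X3)" "pro_elem V A (s4, r4, X4)"
      using mem u v x y by auto
    have c: "s1 = r2" "s3 = r4" using h u v x y by auto
    have geq: "(s2, r1, (\<lambda>i. if valid_idx V A i then gmult (fst i) (X1 i) (X2 i) else undefined)) =
       (s4, r3, (\<lambda>i. if valid_idx V A i then gmult (fst i) (X3 i) (X4 i) else undefined))"
      using h u v x y by simp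
    then have e: "s2 = s4" "r1 = r3" by auto
    have eq: "\<And>i. valid_idx V A i \<Longrightarrow> gmult (fst i) (X1 i) (X2 i) = gmult (fst i) (X3 i) (X4 i)"
    proof -
      fix i assume "valid_idx V A i"
      then show "gmult (fst i) (X1 i) (X2 i) = gmult (fst i) (X3 i) (X4 i)"
        using fun_cong[OF arg_cong[where f = "\<lambda>p. snd (snd p)", OF geq], of i] by simp
    qed
    interpret E: eqd V A s1 r1 s2 r2 s3 r3 s4 r4 X1 X2 X3 X4
      using assms A p c e eq by unfold_locales auto
    have un: "\<And>X s r i. pro_elem V A (s, r, X) \<Longrightarrow> \<not> valid_idx V A i \<Longrightarrow> X i = undefined"
      by (rule pro_elem_verts(3))
    have vs: "s1 \<in> verts A" using pro_elem_verts[OF p(1)] by auto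
    let ?I = "sgd_I (free_pro V A)"
    from E.final show "\<exists>t\<in>edges ?I.
           src ?I (Inl u) = rng ?I t \<and> gmult ?I (Inl u) t = Inl x \<and> src ?I t = rng ?I (Inl y) \<and> Inl v = gmult ?I t (Inl y) \<or>
           src ?I (Inl x) = rng ?I t \<and> gmult ?I (Inl x) t = Inl u \<and> src ?I t = rng ?I (Inl v) \<and> Inl y = gmult ?I t (Inl v)"
    proof (elim disjE conjE exE)
      assume "X1 = X3" "X2 = X4" "s1 = s3"
      then show ?thesis
      proof (intro bexI[of _ "Inr s1"] disjI1)
        show "Inr s1 \<in> edges ?I" using vs by simp
        show "src ?I (Inl u) = rng ?I (Inr s1) \<and> gmult ?I (Inl u) (Inr s1) = Inl x \<and> src ?I (Inr s1) = rng ?I (Inl y) \<and>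
          Inl v = gmult ?I (Inr s1) (Inl y)" using u v x y c e \<open>X1 = X3\<close> \<open>X2 = X4\<close> \<open>s1 = s3\<close> by simp
      qed
    next
      fix t assume t: "pro_elem V A (s3, s1, t)"
        "\<forall>i. valid_idx V A i \<longrightarrow> gmult (fst i) (X1 i) (t i) = X3 i \<and> X2 i = gmult (fst i) (t i) (X4 i)"
      have f1: "(\<lambda>i. if valid_idx V A i then gmult (fst i) (X1 i) (t i) else undefined) = X3"
        using t(2) un[OF p(3)] by (auto intro!: ext)
      have f2: "(\<lambda>i. if valid_idx V A i then gmult (fst i) (t i) (X4 i) else undefined) = X2"
        using t(2) un[OF p(2)] by (auto intro!: ext)
      show ?thesis
      proof (intro bexI[of _ "Inl (s3, s1, t)"] disjI1)
        show "Inl (s3, s1, t) \<in> edges ?I" using t(1) by simp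
        show "src ?I (Inl u) = rng ?I (Inl (s3, s1, t)) \<and> gmult ?I (Inl u) (Inl (s3, s1, t)) = Inl x \<and> src ?I (Inl (s3, s1, t)) = rng ?I (Inl y) \<and>
          Inl v = gmult ?I (Inl (s3, s1, t)) (Inl y)" using f1 f2 u v x y c e by simp
      qed
    next
      fix t assume t: "pro_elem V A (s1, s3, t)"
        "\<forall>i. valid_idx V A i \<longrightarrow> gmult (fst i) (X3 i) (t i) = X1 i \<and> X4 i = gmult (fst i) (t i) (X2 i)"
      have f1: "(\<lambda>i. if valid_idx V A i then gmult (fst i) (X3 i) (t i) else undefined) = X1"
        using t(2) un[OF p(1)] by (auto intro!: ext)
      have f2: "(\<lambda>i. if valid_idx V A i then gmult (fst i) (t i) (X2 i) else undefined) = X4"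
        using t(2) un[OF p(4)] by (auto intro!: ext)
      show ?thesis
      proof (intro bexI[of _ "Inl (s1, s3, t)"] disjI2)
        show "Inl (s1, s3, t) \<in> edges ?I" using t(1) by simp
        show "src ?I (Inl x) = rng ?I (Inl (s1, s3, t)) \<and> gmult ?I (Inl x) (Inl (s1, s3, t)) = Inl u \<and> src ?I (Inl (s1, s3, t)) = rng ?I (Inl v) \<and>
          Inl y = gmult ?I (Inl (s1, s3, t)) (Inl v)" using f1 f2 u v x y c e by simp
      qed
    qed
  qed
qed

end
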